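(* Let $V\subseteq\mathcal V$ be finite and $\mathbb E,\mathbb F\in\mathit{NProg}(V)$. Then: (1) $\mathbb E\le_P^p\mathbb F$ iff $\bigvee_{\mathcal F\in\mathbb F}\mathrm{span}(\mathcal F)\subseteq\bigvee_{\mathcal E\in\mathbb E}\mathrm{span}(\mathcal E)$; (2) $\mathbb E\le_T^p\mathbb F$ iff $T_{\mathbb E}\sqsubseteq T_{\mathbb F}$ and $\bigvee_{\mathcal F\in\mathbb F}\mathrm{span}(\mathcal F\circ\mathcal P_{T_{\mathbb E}})\subseteq\bigvee_{\mathcal E\in\mathbb E}\mathrm{span}(\mathcal E\circ\mathcal P_{T_{\mathbb E}})$; (3) if both $\mathbb E$ and $\mathbb F$ contain only trace-preserving super-operators, then $\mathbb E\le_T^p\mathbb F$ iff $\mathbb E\le_P^p\mathbb F$.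
   Context: $\mathcal V$ is a countably infinite set of quantum variables, each with state space $\mathbb C^2$; for finite $V$, $\mathcal H_V=\bigotimes_{q\in V}\mathcal H_q$. $\mathcal D(\mathcal H)$: partial density operators; $\mathcal S(\mathcal H)$: projectors, identified with their image subspaces, $\sqsubseteq$ being inclusion. $\mathit{DProg}(V)$: completely positive trace-nonincreasing super-operators on $\mathcal L(\mathcal H_V)$; $\mathit{NProg}(V)$: nonempty, convex, closed subsets of $\mathit{DProg}(V)$. Operators/super-operators on subsystems are implicitly extended by tensoring with identities. For finite $W$ and $P,Q\in\mathcal S(\mathcal H_W)$: $\mathbb E\models_{tot}(\{P\},\{Q\})$ iff for every finite $X\supseteq V\cup W$ and $\rho\in\mathcal D(\mathcal H_X)$, ${\rm tr}(P\rho)\le\inf_{\mathcal E\in\mathbb E}{\rm tr}(Q\mathcal E(\rho))$; $\mathbb E\models_{par}(\{P\},\{Q\})$ iff for all such $X,\rho$, ${\rm tr}(P\rho)\le\inf_{\mathcal E\in\mathbb E}[{\rm tr}(Q\mathcal E(\rho))+{\rm tr}(\rho)-{\rm tr}(\mathcal E(\rho))]$. $\mathbb E\le_T^p\mathbb F$ iff for every finite $W$ and all $P,Q\in\mathcal S(\mathcal H_W)$, $\mathbb E\models_{tot}(\{P\},\{Q\})$ implies $\mathbb F\models_{tot}(\{P\},\{Q\})$; $\le_P^p$ likewise with $\models_{par}$. For a completely positive $\mathcal G(A)=\sum_iG_iAG_i^\dagger$, $\mathrm{span}(\mathcal G)$ is the linear span of the Kraus operators $\{G_i\}$ in $\mathcal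 L(\mathcal H_V)$ (independent of representation); $\bigvee$ of such spans denotes the smallest subspace of $\mathcal L(\mathcal H_V)$ containing them. For $\mathcal E\in\mathit{DProg}(V)$, $T_{\mathcal E}=\{|\psi\rangle:{\rm tr}(\mathcal E(|\psi\rangle\langle\psi|))={\rm tr}(|\psi\rangle\langle\psi|)\}$, and $T_{\mathbb E}=\bigcap_{\mathcal E\in\mathbb E}T_{\mathcal E}$ (a subspace, identified with its projector). $\mathcal P_{T}$ denotes the super-operator $\rho\mapsto T\rho T$. *)

theory Defs
  imports Complex_Main
begin

text \<open>Each variable has state space C^2. For finite V, a computational basis of H_V
  is indexed by the subsets S of V (q in S means q is in state |1>).
  Vectors of H_V are functions on subsets of V, operators on H_V are matrices
  indexed by pairs of subsets of V; entries outside Pow V are required to be 0.\<close>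

type_synonym qvar = nat
type_synonym vec = "qvar set \<Rightarrow> complex"
type_synonym op = "qvar set \<Rightarrow> qvar set \<Rightarrow> complex"
type_synonym superop = "op \<Rightarrow> op"

definition supp_vec :: "qvar set \<Rightarrow> vec \<Rightarrow> bool" where
  "supp_vec V \<psi> \<longleftrightarrow> (\<forall>S. \<not> S \<subseteq> V \<longrightarrow> \<psi> S = 0)"

definition supp_op :: "qvar set \<Rightarrow> op \<Rightarrow> bool" where
  "supp_op V A \<longleftrightarrow> (\<forall>S T. \<not> (S \<subseteq> V \<and> T \<subseteq> V) \<longrightarrow> A S T = 0)"

definition mmult :: "qvar set \<Rightarrow> op \<Rightarrow> op \<Rightarrow> op" where
  "mmult V A B = (\<lambda>S T. if S \<subseteq> V \<and> T \<subseteq> V then (\<Sum>U\<in>Pow V. A S U * B U T) else 0)"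

definition adj :: "op \<Rightarrow> op" where
  "adj A = (\<lambda>S T. cnj (A T S))"

definition trace :: "qvar set \<Rightarrow> op \<Rightarrow> complex" where
  "trace V A = (\<Sum>S\<in>Pow V. A S S)"

definition apply_op :: "qvar set \<Rightarrow> op \<Rightarrow> vec \<Rightarrow> vec" where
  "apply_op V A \<psi> = (\<lambda>S. if S \<subseteq> V then (\<Sum>T\<in>Pow V. A S T * \<psi> T) else 0)"

definition inner :: "qvar set \<Rightarrow> vec \<Rightarrow> vec \<Rightarrow> complex" where
  "inner V \<phi> \<psi> = (\<Sum>S\<in>Pow V. cnj (\<phi> S) * \<psi> S)"

definition outer :: "qvar set \<Rightarrow> vec \<Rightarrow> vec \<Rightarrow> op" where
  "outer V \<psi> \<phi> = (\<lambda>S T. if S \<subseteq> V \<and> T \<subseteq> V then \<psi> S * cnj (\<phi> T) else 0)"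

definition positive_op :: "qvar set \<Rightarrow> op \<Rightarrow> bool" where
  "positive_op V A \<longleftrightarrow> supp_op V A \<and>
     (\<forall>\<psi>. supp_vec V \<psi> \<longrightarrow> inner V \<psi> (apply_op V A \<psi>) \<in> \<real> \<and> 0 \<le> Re (inner V \<psi> (apply_op V A \<psi>)))"

definition density :: "qvar set \<Rightarrow> op \<Rightarrow> bool" where
  "density V \<rho> \<longleftrightarrow> positive_op V \<rho> \<and> Re (trace V \<rho>) \<le> 1"

definition projector :: "qvar set \<Rightarrow> op \<Rightarrow> bool" where
  "projector V P \<longleftrightarrow> supp_op V P \<and> adj P = P \<and> mmult V P P = P"

definition op_range :: "qvar set \<Rightarrow> op \<Rightarrow> vec set" where
  "op_range V P = {apply_op V P \<psi> | \<psi>. supp_vec V \<psi>}"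

definition proj_of :: "qvar set \<Rightarrow> vec set \<Rightarrow> op" where
  "proj_of V K = (THE P. projector V P \<and> op_range V P = K)"

definition kraus_rep :: "qvar set \<Rightarrow> op list \<Rightarrow> superop \<Rightarrow> bool" where
  "kraus_rep V Ks E \<longleftrightarrow> (\<forall>K\<in>set Ks. supp_op V K) \<and>
     E = (\<lambda>\<rho> S T. \<Sum>K\<leftarrow>Ks. mmult V (mmult V K \<rho>) (adj K) S T)"

text \<open>DProg(V): completely positive (i.e. having a Kraus representation)
  trace-nonincreasing super-operators on L(H_V).\<close>
definition dprog :: "qvar set \<Rightarrow> superop \<Rightarrow> bool" where
  "dprog V E \<longleftrightarrow> (\<exists>Ks. kraus_rep V Ks E) \<and>
     (\<forall>\<rho>. positive_op V \<rho> \<longrightarrow> Re (trace V (E \<rho>)) \<le> Re (trace V \<rho>))"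

definition trace_preserving :: "qvar set \<Rightarrow> superop \<Rightarrow> bool" where
  "trace_preserving V E \<longleftrightarrow> (\<forall>\<rho>. supp_op V \<rho> \<longrightarrow> trace V (E \<rho>) = trace V \<rho>)"

definition convex_so :: "superop set \<Rightarrow> bool" where
  "convex_so \<E> \<longleftrightarrow> (\<forall>E\<in>\<E>. \<forall>F\<in>\<E>. \<forall>t::real. 0 \<le> t \<and> t \<le> 1 \<longrightarrow>
     (\<lambda>\<rho> S T. complex_of_real t * E \<rho> S T + complex_of_real (1 - t) * F \<rho> S T) \<in> \<E>)"

text \<open>Closedness (the space of super-operators on L(H_V) is finite dimensional,
  so entrywise convergence is convergence in any norm).\<close>
definition closed_so :: "superop set \<Rightarrow> bool" where
  "closed_so \<E> \<longleftrightarrow> (\<forall>f E. (\<forall>n. f n \<in> \<E>) \<and> (\<forall>\<rho> S T. (\<lambda>n. f n \<rho> S T) \<longlonglongrightarrow> E \<rho> S T)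
     \<longrightarrow> E \<in> \<E>)"

definition nprog :: "qvar set \<Rightarrow> superop set \<Rightarrow> bool" where
  "nprog V \<E> \<longleftrightarrow> \<E> \<noteq> {} \<and> \<E> \<subseteq> {E. dprog V E} \<and> convex_so \<E> \<and> closed_so \<E>"

text \<open>Extension of an operator on H_W to H_X (W \<subseteq> X) by tensoring with the identity.\<close>
definition ext_op :: "qvar set \<Rightarrow> qvar set \<Rightarrow> op \<Rightarrow> op" where
  "ext_op W X A = (\<lambda>S T. if S \<subseteq> X \<and> T \<subseteq> X then
      A (S \<inter> W) (T \<inter> W) * (if S - W = T - W then 1 else 0) else 0)"

text \<open>Extension of a super-operator on L(H_V) to L(H_X) (V \<subseteq> X): E \<otimes> id.
  The block of rho at (a,b) (a,b subsets of X-V) is mapped by E.\<close>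
definition ext_so :: "qvar set \<Rightarrow> qvar set \<Rightarrow> superop \<Rightarrow> superop" where
  "ext_so V X E = (\<lambda>\<rho> S T. if S \<subseteq> X \<and> T \<subseteq> X then
      E (\<lambda>S' T'. if S' \<subseteq> V \<and> T' \<subseteq> V then \<rho> (S' \<union> (S - V)) (T' \<union> (T - V)) else 0)
        (S \<inter> V) (T \<inter> V) else 0)"

definition valid_tot :: "qvar set \<Rightarrow> superop set \<Rightarrow> qvar set \<Rightarrow> op \<Rightarrow> op \<Rightarrow> bool" where
  "valid_tot V \<E> W P Q \<longleftrightarrow> (\<forall>X \<rho>. finite X \<and> V \<union> W \<subseteq> X \<and> density X \<rho> \<longrightarrow>
     Re (trace X (mmult X (ext_op W X P) \<rho>))
       \<le> (INF E\<in>\<E>. Re (trace X (mmult X (ext_op W X Q) (ext_so V X E \<rho>)))))"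

definition valid_par :: "qvar set \<Rightarrow> superop set \<Rightarrow> qvar set \<Rightarrow> op \<Rightarrow> op \<Rightarrow> bool" where
  "valid_par V \<E> W P Q \<longleftrightarrow> (\<forall>X \<rho>. finite X \<and> V \<union> W \<subseteq> X \<and> density X \<rho> \<longrightarrow>
     Re (trace X (mmult X (ext_op W X P) \<rho>))
       \<le> (INF E\<in>\<E>. Re (trace X (mmult X (ext_op W X Q) (ext_so V X E \<rho>)))
                    + Re (trace X \<rho>) - Re (trace X (ext_so V X E \<rho>))))"

definition le_T :: "qvar set \<Rightarrow> superop set \<Rightarrow> superop set \<Rightarrow> bool" where
  "le_T V \<E> \<F> \<longleftrightarrow> (\<forall>W P Q. finite W \<and> projector W P \<and> projector W Q \<longrightarrow>
     valid_tot V \<E> W P Q \<longrightarrow> valid_tot V \<F> W P Q)"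

definition le_P :: "qvar set \<Rightarrow> superop set \<Rightarrow> superop set \<Rightarrow> bool" where
  "le_P V \<E> \<F> \<longleftrightarrow> (\<forall>W P Q. finite W \<and> projector W P \<and> projector W Q \<longrightarrow>
     valid_par V \<E> W P Q \<longrightarrow> valid_par V \<F> W P Q)"

definition cspan :: "op set \<Rightarrow> op set" where
  "cspan A = {B. \<exists>F c. finite F \<and> F \<subseteq> A \<and> B = (\<lambda>S T. \<Sum>K\<in>F. c K * K S T)}"

text \<open>span(G): span of the Kraus operators (independent of the representation;
  we take all representations).\<close>
definition kspan :: "qvar set \<Rightarrow> superop \<Rightarrow> op set" where
  "kspan V G = cspan (\<Union>{set Ks | Ks. kraus_rep V Ks G})"

definition join_span :: "qvar set \<Rightarrow> superop set \<Rightarrow> op set" where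
  "join_span V \<G> = cspan (\<Union>G\<in>\<G>. kspan V G)"

definition term_space :: "qvar set \<Rightarrow> superop \<Rightarrow> vec set" where
  "term_space V E = {\<psi>. supp_vec V \<psi> \<and>
      trace V (E (outer V \<psi> \<psi>)) = trace V (outer V \<psi> \<psi>)}"

definition term_space_set :: "qvar set \<Rightarrow> superop set \<Rightarrow> vec set" where
  "term_space_set V \<E> = {\<psi>. supp_vec V \<psi> \<and> (\<forall>E\<in>\<E>. \<psi> \<in> term_space V E)}"

definition proj_so :: "qvar set \<Rightarrow> op \<Rightarrow> superop" where
  "proj_so V P = (\<lambda>\<rho>. mmult V (mmult V P \<rho>) P)"

end

theory Submission
  imports Defs
begin


lemma sum_Pow_cong[cong]: "X = Y \<Longrightarrow> (\<And>x. x \<subseteq> Y =simp=> f x = g x) \<Longrightarrow> sum f (Pow X) = sum g (Pow Y)"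
  unfolding simp_implies_def by (rule sum.cong) auto

definition idop :: "qvar set \<Rightarrow> op" where
  "idop X = (\<lambda>S T. if S \<subseteq> X \<and> T \<subseteq> X \<and> S = T then 1 else 0)"

definition ket :: "qvar set \<Rightarrow> vec" where
  "ket S = (\<lambda>U. if U = S then 1 else 0)"

lemma supp_mmult[simp]: "supp_op X (mmult X A B)"
  by (simp add: supp_op_def mmult_def)
lemma supp_apply[simp]: "supp_vec X (apply_op X A \<psi>)"
  by (simp add: supp_vec_def apply_op_def)
lemma supp_outer[simp]: "supp_op X (outer X u v)"
  by (simp add: supp_op_def outer_def)
lemma supp_idop[simp]: "supp_op X (idop X)"
  by (simp add: supp_op_def idop_def)
lemma supp_adj[simp]: "supp_op X A \<Longrightarrow> supp_op X (adj A)"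
  by (auto simp add: supp_op_def adj_def)
lemma supp_op_diff[simp]: "supp_op X A \<Longrightarrow> supp_op X B \<Longrightarrow> supp_op X (A - B)"
  by (auto simp add: supp_op_def)
lemma adj_adj[simp]: "adj (adj A) = A"
  by (simp add: adj_def)
lemma adj_diff: "adj (A - B) = adj A - adj B"
  by (simp add: adj_def fun_eq_iff)
lemma adj_idop[simp]: "adj (idop X) = idop X"
  by (auto simp add: adj_def idop_def fun_eq_iff)

lemma mmult_assoc: "mmult X (mmult X A B) C = mmult X A (mmult X B C)"
proof (intro ext)
  fix S T
  show "mmult X (mmult X A B) C S T = mmult X A (mmult X B C) S T"
  proof (cases "S \<subseteq> X \<and> T \<subseteq> X")
    case True
    have "mmult X (mmult X A B) C S T = (\<Sum>U\<in>Pow X. \<Sum>W\<in>Pow X. A S W * B W U * C U T)"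
      using True by (simp add: mmult_def sum_distrib_right)
    also have "\<dots> = (\<Sum>W\<in>Pow X. \<Sum>U\<in>Pow X. A S W * B W U * C U T)"
      by (rule sum.swap)
    also have "\<dots> = mmult X A (mmult X B C) S T"
      using True by (simp add: mmult_def sum_distrib_left mult.assoc)
    finally show ?thesis .
  qed (auto simp add: mmult_def)
qed

lemma trace_comm: "trace X (mmult X A B) = trace X (mmult X B A)"
proof -
  have "trace X (mmult X A B) = (\<Sum>S\<in>Pow X. \<Sum>U\<in>Pow X. A S U * B U S)"
    by (simp add: trace_def mmult_def)
  also have "\<dots> = (\<Sum>U\<in>Pow X. \<Sum>S\<in>Pow X. B U S * A S U)"
    by (subst sum.swap) (simp add: mult.commute)
  also have "\<dots> = trace X (mmult X B A)"
    by (simp add: trace_def mmult_def)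
  finally show ?thesis .
qed

lemma adj_mmult: "adj (mmult X A B) = mmult X (adj B) (adj A)"
  by (auto simp add: adj_def mmult_def fun_eq_iff mult.commute)

lemma apply_mmult: "apply_op X (mmult X A B) \<psi> = apply_op X A (apply_op X B \<psi>)"
proof (intro ext)
  fix S
  show "apply_op X (mmult X A B) \<psi> S = apply_op X A (apply_op X B \<psi>) S"
  proof (cases "S \<subseteq> X")
    case True
    have "apply_op X (mmult X A B) \<psi> S = (\<Sum>T\<in>Pow X. \<Sum>U\<in>Pow X. A S U * B U T * \<psi> T)"
      using True by (simp add: apply_op_def mmult_def sum_distrib_right)
    also have "\<dots> = (\<Sum>U\<in>Pow X. \<Sum>T\<in>Pow X. A S U * B U T * \<psi> T)"
      by (rule sum.swap)
    also have "\<dots> = apply_op X A (apply_op X B \<psi>) S"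
      using True by (simp add: apply_op_def sum_distrib_left mult.assoc)
    finally show ?thesis .
  qed (simp add: apply_op_def)
qed

lemma inner_adj: "inner X u (apply_op X A v) = inner X (apply_op X (adj A) u) v"
proof -
  have "inner X u (apply_op X A v) = (\<Sum>S\<in>Pow X. \<Sum>T\<in>Pow X. cnj (u S) * A S T * v T)"
    by (simp add: inner_def apply_op_def sum_distrib_left mult.assoc)
  also have "\<dots> = (\<Sum>T\<in>Pow X. \<Sum>S\<in>Pow X. cnj (u S) * A S T * v T)"
    by (rule sum.swap)
  also have "\<dots> = inner X (apply_op X (adj A) u) v"
    by (simp add: inner_def apply_op_def adj_def sum_distrib_right sum_distrib_left ac_simps)
  finally show ?thesis .
qed

lemma mmult_outer_left: "mmult X A (outer X u v) = outer X (apply_op X A u) v"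
  by (auto simp add: mmult_def outer_def apply_op_def fun_eq_iff sum_distrib_right mult.assoc
     )

lemma mmult_outer_right: "mmult X (outer X u v) (adj B) = outer X u (apply_op X B v)"
  by (auto simp add: mmult_def outer_def apply_op_def adj_def fun_eq_iff sum_distrib_left
      mult.commute mult.left_commute)

lemma mmult_outer_outer: "mmult X (outer X u v) (outer X w z) = outer X (\<lambda>S. inner X v w * u S) z"
  by (auto simp add: mmult_def outer_def inner_def fun_eq_iff sum_distrib_left sum_distrib_right
      mult.commute mult.left_commute)

lemma trace_outer: "trace X (outer X u v) = inner X v u"
  by (simp add: trace_def outer_def inner_def mult.commute)

lemma trace_mmult_outer: "trace X (mmult X A (outer X u v)) = inner X v (apply_op X A u)"
  by (simp add: mmult_outer_left trace_outer)

lemma inner_self: "inner X u u = complex_of_real (\<Sum>S\<in>Pow X. (cmod (u S))\<^sup>2)"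
  by (simp add: inner_def complex_norm_square[symmetric] mult.commute)

lemma inner_self_Re: "Re (inner X u u) \<ge> 0"
  by (simp add: inner_self sum_nonneg)

lemma inner_self_real: "inner X u u = complex_of_real (Re (inner X u u))"
  by (simp add: inner_self)

lemma inner_self_zero: assumes "finite X" "supp_vec X u" "Re (inner X u u) = 0" shows "u = (\<lambda>_. 0)"
proof (rule ext)
  fix S
  have "\<forall>x\<in>Pow X. (cmod (u x))\<^sup>2 = 0"
    using assms by (subst sum_nonneg_eq_0_iff[symmetric]) (auto simp: inner_self)
  then show "u S = 0" using assms(2) by (cases "S \<subseteq> X") (auto simp: supp_vec_def)
qed

lemma if01_mult[simp]: "(if P then 1 else 0) * (a::complex) = (if P then a else 0)"
  "a * (if P then 1 else 0) = (if P then a else 0)" by auto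

lemma mmult_idop_left: "finite X \<Longrightarrow> supp_op X A \<Longrightarrow> mmult X (idop X) A = A"
  by (auto simp add: mmult_def idop_def fun_eq_iff supp_op_def conj_commute cong: conj_cong)

lemma mmult_idop_right: "finite X \<Longrightarrow> supp_op X A \<Longrightarrow> mmult X A (idop X) = A"
  by (auto simp add: mmult_def idop_def fun_eq_iff supp_op_def)

lemma apply_idop: "finite X \<Longrightarrow> supp_vec X u \<Longrightarrow> apply_op X (idop X) u = u"
  by (auto simp add: apply_op_def idop_def fun_eq_iff supp_vec_def)

lemma mmult_diff_left: "mmult X (A - B) C = mmult X A C - mmult X B C"
  by (auto simp add: mmult_def fun_eq_iff algebra_simps sum_subtractf)
lemma mmult_diff_right: "mmult X A (B - C) = mmult X A B - mmult X A C"
  by (auto simp add: mmult_def fun_eq_iff algebra_simps sum_subtractf)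
lemma trace_diff: "trace X (A - B) = trace X A - trace X B"
  by (simp add: trace_def sum_subtractf)
lemma apply_diff: "apply_op X (A - B) u = (\<lambda>S. apply_op X A u S - apply_op X B u S)"
  by (auto simp add: apply_op_def fun_eq_iff algebra_simps sum_subtractf)

lemma apply_ket: "S \<subseteq> X \<Longrightarrow> finite X \<Longrightarrow> apply_op X A (ket S) = (\<lambda>U. if U \<subseteq> X then A U S else 0)"
  by (auto simp add: apply_op_def ket_def fun_eq_iff)

lemma op_eq_ket: assumes "finite X" "supp_op X A" "supp_op X B"
  "\<And>S. S \<subseteq> X \<Longrightarrow> apply_op X A (ket S) = apply_op X B (ket S)"
  shows "A = B"
proof (intro ext)
  fix U S
  show "A U S = B U S"
  proof (cases "U \<subseteq> X \<and> S \<subseteq> X")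
    case True
    then have "apply_op X A (ket S) U = apply_op X B (ket S) U" using assms(4) by simp
    then show ?thesis using True assms(1) by (simp add: apply_ket)
  qed (use assms(2,3) in \<open>auto simp: supp_op_def\<close>)
qed

lemma supp_ket: "S \<subseteq> X \<Longrightarrow> supp_vec X (ket S)"
  by (auto simp: supp_vec_def ket_def)



lemma apply_lin: "apply_op X A (\<lambda>S. a * u S + b * v S) = (\<lambda>S. a * apply_op X A u S + b * apply_op X A v S)"
  by (auto simp: apply_op_def fun_eq_iff sum.distrib sum_distrib_left algebra_simps)
lemma apply_sub: "apply_op X A (\<lambda>S. u S - v S) = (\<lambda>S. apply_op X A u S - apply_op X A v S)"
  by (auto simp: apply_op_def fun_eq_iff sum_subtractf algebra_simps)
lemma apply_zero[simp]: "apply_op X A (\<lambda>S. 0) = (\<lambda>S. 0)"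
  by (auto simp: apply_op_def fun_eq_iff)
lemma inner_lin_right: "inner X w (\<lambda>S. a * u S + b * v S) = a * inner X w u + b * inner X w v"
  by (simp add: inner_def sum.distrib sum_distrib_left algebra_simps)
lemma inner_lin_left: "inner X (\<lambda>S. a * u S + b * v S) w = cnj a * inner X u w + cnj b * inner X v w"
  by (simp add: inner_def sum.distrib sum_distrib_left algebra_simps)
lemma inner_sub_right: "inner X w (\<lambda>S. u S - v S) = inner X w u - inner X w v"
  by (simp add: inner_def sum_subtractf algebra_simps)
lemma inner_sub_left: "inner X (\<lambda>S. u S - v S) w = inner X u w - inner X v w"
  by (simp add: inner_def sum_subtractf algebra_simps)
lemma inner_cnj: "cnj (inner X u v) = inner X v u"
  by (simp add: inner_def mult.commute)
lemma inner_zero[simp]: "inner X u (\<lambda>S. 0) = 0" "inner X (\<lambda>S. 0) u = 0"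
  by (simp_all add: inner_def)

lemma apply_outer: "apply_op X (outer X u v) w = (\<lambda>S. if S \<subseteq> X then u S * inner X v w else 0)"
  by (auto simp: apply_op_def outer_def inner_def fun_eq_iff sum_distrib_left ac_simps)

lemma adj_outer: "adj (outer X u v) = outer X v u"
  by (auto simp: adj_def outer_def fun_eq_iff)

lemma projector_idem: "projector X R \<Longrightarrow> mmult X R R = R"
  by (simp add: projector_def)
lemma projector_adj: "projector X R \<Longrightarrow> adj R = R"
  by (simp add: projector_def)
lemma projector_supp: "projector X R \<Longrightarrow> supp_op X R"
  by (simp add: projector_def)
lemma projector_apply2: "projector X R \<Longrightarrow> apply_op X R (apply_op X R u) = apply_op X R u"
  by (metis apply_mmult projector_idem)

lemma op_range_char: "projector X R \<Longrightarrow> op_range X R = {y. supp_vec X y \<and> apply_op X R y = y}"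
proof -
  assume p: "projector X R"
  show ?thesis unfolding op_range_def
  proof (intro set_eqI iffI)
    fix y assume "y \<in> {apply_op X R \<psi> |\<psi>. supp_vec X \<psi>}"
    then obtain \<psi> where "y = apply_op X R \<psi>" by blast
    then show "y \<in> {y. supp_vec X y \<and> apply_op X R y = y}" using projector_apply2[OF p] by simp
  next
    fix y assume "y \<in> {y. supp_vec X y \<and> apply_op X R y = y}"
    then show "y \<in> {apply_op X R \<psi> |\<psi>. supp_vec X \<psi>}" by force
  qed
qed

lemma inner_proj: "projector X R \<Longrightarrow> inner X (apply_op X R u) (apply_op X R u) = inner X u (apply_op X R u)"
  by (metis inner_adj projector_adj projector_apply2)

lemma projector_compl: assumes "finite X" "projector X R" shows "projector X (idop X - R)"
proof -
  have s: "supp_op X R" using assms by (simp add: projector_def)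
  have "mmult X (idop X - R) (idop X - R) = idop X - R"
    using assms s
    by (simp add: mmult_diff_left mmult_diff_right mmult_idop_left mmult_idop_right projector_idem)
       (simp add: fun_eq_iff)
  then show ?thesis using s assms by (simp add: projector_def adj_diff projector_adj)
qed

lemma trace_sandwich_entry: assumes "S \<subseteq> X"
  shows "mmult X (mmult X B \<sigma>) (adj B) S S
     = inner X (\<lambda>U. if U \<subseteq> X then cnj (B S U) else 0) (apply_op X \<sigma> (\<lambda>U. if U \<subseteq> X then cnj (B S U) else 0))"
  using assms apply (simp add: mmult_def inner_def apply_op_def adj_def sum_distrib_left sum_distrib_right ac_simps)
  apply (subst sum.swap) apply (simp add: ac_simps)
  done

lemma pos_sandwich_trace: assumes "positive_op X \<sigma>"
  shows "Re (trace X (mmult X (mmult X B \<sigma>) (adj B))) \<ge> 0"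
proof -
  have "Re (trace X (mmult X (mmult X B \<sigma>) (adj B))) = (\<Sum>S\<in>Pow X. Re (mmult X (mmult X B \<sigma>) (adj B) S S))"
    by (simp add: trace_def)
  also have "\<dots> \<ge> 0"
    apply (rule sum_nonneg)
    using assms by (auto simp: trace_sandwich_entry positive_op_def supp_vec_def)
  finally show ?thesis .
qed

lemma pos_sandwich: assumes "positive_op X \<sigma>"
  shows "positive_op X (mmult X (mmult X B \<sigma>) (adj B))"
  unfolding positive_op_def
proof (intro conjI allI impI)
  fix \<psi> assume "supp_vec X \<psi>"
  have e: "inner X \<psi> (apply_op X (mmult X (mmult X B \<sigma>) (adj B)) \<psi>)
      = inner X (apply_op X (adj B) \<psi>) (apply_op X \<sigma> (apply_op X (adj B) \<psi>))"
    by (simp add: apply_mmult inner_adj)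
  show "inner X \<psi> (apply_op X (mmult X (mmult X B \<sigma>) (adj B)) \<psi>) \<in> \<real>"
    using assms unfolding e positive_op_def by simp
  show "0 \<le> Re (inner X \<psi> (apply_op X (mmult X (mmult X B \<sigma>) (adj B)) \<psi>))"
    using assms unfolding e positive_op_def by simp
qed simp

lemma trace_pos: assumes "finite X" "positive_op X \<sigma>" shows "Re (trace X \<sigma>) \<ge> 0"
proof -
  have "supp_op X \<sigma>" using assms by (simp add: positive_op_def)
  then have "mmult X (mmult X (idop X) \<sigma>) (adj (idop X)) = \<sigma>"
    using assms by (simp add: mmult_idop_left mmult_idop_right)
  then show ?thesis using pos_sandwich_trace[OF assms(2), of "idop X"] by simp
qed

lemma positive_outer: "positive_op X (outer X \<psi> \<psi>)"
  unfolding positive_op_def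
proof (intro conjI allI impI)
  fix \<phi> assume "supp_vec X \<phi>"
  have "inner X \<phi> (apply_op X (outer X \<psi> \<psi>) \<phi>) = inner X \<phi> \<psi> * inner X \<psi> \<phi>"
    unfolding apply_outer by (simp add: inner_def sum_distrib_right mult.assoc)
  also have "\<dots> = inner X \<phi> \<psi> * cnj (inner X \<phi> \<psi>)"
    by (simp add: inner_cnj)
  also have "\<dots> = complex_of_real ((cmod (inner X \<phi> \<psi>))\<^sup>2)"
    by (simp only: complex_norm_square)
  finally have e: "inner X \<phi> (apply_op X (outer X \<psi> \<psi>) \<phi>) = complex_of_real ((cmod (inner X \<phi> \<psi>))\<^sup>2)" .
  show "inner X \<phi> (apply_op X (outer X \<psi> \<psi>) \<phi>) \<in> \<real>" unfolding e by simp
  show "0 \<le> Re (inner X \<phi> (apply_op X (outer X \<psi> \<psi>) \<phi>))" unfolding e by simp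
qed simp

lemma density_outer: "Re (inner X \<psi> \<psi>) \<le> 1 \<Longrightarrow> density X (outer X \<psi> \<psi>)"
  by (simp add: density_def positive_outer trace_outer)

definition subsp :: "qvar set \<Rightarrow> vec set \<Rightarrow> bool" where
  "subsp X U \<longleftrightarrow> (\<forall>u\<in>U. supp_vec X u) \<and> (\<lambda>_. 0) \<in> U \<and>
     (\<forall>u\<in>U. \<forall>v\<in>U. \<forall>a b. (\<lambda>S. a * u S + b * v S) \<in> U)"

lemma mmult_add_left: "mmult X (\<lambda>S T. A S T + B S T) C = (\<lambda>S T. mmult X A C S T + mmult X B C S T)"
  by (auto simp: mmult_def fun_eq_iff sum.distrib algebra_simps)
lemma mmult_add_right: "mmult X C (\<lambda>S T. A S T + B S T) = (\<lambda>S T. mmult X C A S T + mmult X C B S T)"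
  by (auto simp: mmult_def fun_eq_iff sum.distrib algebra_simps)
lemma mmult_scale_left: "mmult X (\<lambda>S T. c * A S T) B = (\<lambda>S T. c * mmult X A B S T)"
  by (auto simp: mmult_def fun_eq_iff sum_distrib_left algebra_simps)
lemma mmult_scale_right: "mmult X B (\<lambda>S T. c * A S T) = (\<lambda>S T. c * mmult X B A S T)"
  by (auto simp: mmult_def fun_eq_iff sum_distrib_left algebra_simps)
lemma mmult_zero_left[simp]: "mmult X (\<lambda>S T. 0) B = (\<lambda>S T. 0)"
  by (auto simp: mmult_def fun_eq_iff)
lemma mmult_zero_right[simp]: "mmult X B (\<lambda>S T. 0) = (\<lambda>S T. 0)"
  by (auto simp: mmult_def fun_eq_iff)
lemma outer_zero[simp]: "outer X (\<lambda>S. 0) v = (\<lambda>S T. 0)" "outer X v (\<lambda>S. 0) = (\<lambda>S T. 0)"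
  by (auto simp: outer_def fun_eq_iff)

lemma projector_diag_le1: assumes "finite X" "projector X R" "S \<subseteq> X" shows "Re (R S S) \<le> 1"
proof -
  have a: "R U S = cnj (R S U)" for U
  proof -
    have "adj R U S = R U S" using projector_adj[OF assms(2)] by simp
    then show ?thesis by (simp add: adj_def)
  qed
  have "R S S = mmult X R R S S" using assms by (simp add: projector_idem)
  also have "\<dots> = (\<Sum>U\<in>Pow X. R S U * R U S)" using assms(3) by (simp add: mmult_def)
  also have "\<dots> = (\<Sum>U\<in>Pow X. complex_of_real ((cmod (R S U))\<^sup>2))"
    by (simp only: a complex_norm_square)
  also have "\<dots> = complex_of_real (\<Sum>U\<in>Pow X. (cmod (R S U))\<^sup>2)"
    by (simp only: of_real_sum)
  finally have e: "R S S = complex_of_real (\<Sum>U\<in>Pow X. (cmod (R S U))\<^sup>2)" .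
  have "(\<Sum>U\<in>Pow X. (cmod (R S U))\<^sup>2) \<ge> (cmod (R S S))\<^sup>2"
    using assms(1,3) by (intro member_le_sum) auto
  moreover have "(cmod (R S S))\<^sup>2 = (Re (R S S))\<^sup>2" using e by (simp add: cmod_def)
  ultimately have "Re (R S S) \<ge> Re (R S S) * Re (R S S)" using e by (simp add: power2_eq_square)
  show ?thesis
  proof (rule ccontr)
    assume "\<not> Re (R S S) \<le> 1"
    then have "Re (R S S) * Re (R S S) > Re (R S S) * 1" by (intro mult_strict_left_mono) auto
    with \<open>Re (R S S) \<ge> Re (R S S) * Re (R S S)\<close> show False by simp
  qed
qed



lemma apply_add_op: "apply_op X (\<lambda>S T. A S T + B S T) x = (\<lambda>S. apply_op X A x S + apply_op X B x S)"
  by (auto simp: apply_op_def fun_eq_iff sum.distrib algebra_simps)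
lemma apply_scale_op: "apply_op X (\<lambda>S T. c * A S T) x = (\<lambda>S. c * apply_op X A x S)"
  by (auto simp: apply_op_def fun_eq_iff sum_distrib_left algebra_simps)
lemma apply_zero_op[simp]: "apply_op X (\<lambda>S T. 0) x = (\<lambda>S. 0)"
  by (auto simp: apply_op_def fun_eq_iff)
lemma trace_add: "trace X (\<lambda>S T. A S T + B S T) = trace X A + trace X B"
  by (simp add: trace_def sum.distrib)
lemma trace_scale: "trace X (\<lambda>S T. c * A S T) = c * trace X A"
  by (simp add: trace_def sum_distrib_left)

lemma subsp_comb: "subsp X U \<Longrightarrow> u \<in> U \<Longrightarrow> v \<in> U \<Longrightarrow> (\<lambda>S. a * u S + b * v S) \<in> U"
  unfolding subsp_def by blast

lemma proj_extend:
  assumes fin: "finite X" and p: "projector X R" and sub: "subsp X U" and rU: "op_range X R \<subseteq> U"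
    and uU: "u \<in> U" and ne: "apply_op X R u \<noteq> u"
  shows "\<exists>R'. projector X R' \<and> op_range X R' \<subseteq> U \<and> Re (trace X R') = Re (trace X R) + 1"
proof -
  define w where "w = (\<lambda>S. u S - apply_op X R u S)"
  have su: "supp_vec X u" using sub uU by (simp add: subsp_def)
  have sw: "supp_vec X w" using su by (auto simp: w_def supp_vec_def apply_op_def)
  have Rw: "apply_op X R w = (\<lambda>S. 0)"
    unfolding w_def apply_sub projector_apply2[OF p] by simp
  have wne: "w \<noteq> (\<lambda>S. 0)"
  proof
    assume "w = (\<lambda>S. 0)"
    then have "\<forall>S. u S - apply_op X R u S = 0" by (metis w_def)
    then have "apply_op X R u = u" by (simp add: fun_eq_iff)
    with ne show False by simp
  qed
  define c where "c = Re (inner X w w)"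
  have cpos: "c > 0"
  proof -
    have "c \<ge> 0" by (simp add: c_def inner_self_Re)
    moreover have "c \<noteq> 0" using inner_self_zero[OF fin sw] wne by (auto simp: c_def)
    ultimately show ?thesis by simp
  qed
  have iww: "inner X w w = complex_of_real c" by (simp add: c_def inner_self_real[symmetric])
  define k where "k = complex_of_real (1 / c)"
  define Om where "Om = outer X w w"
  define R' where "R' = (\<lambda>S T. R S T + k * Om S T)"
  have sR: "supp_op X R" using p by (simp add: projector_def)
  have sR': "supp_op X R'" using sR by (auto simp: R'_def Om_def supp_op_def outer_def)
  have adjR': "adj R' = R'"
  proof -
    have "adj R = R" by (rule projector_adj[OF p])
    moreover have "adj Om = Om" by (simp add: Om_def adj_outer)
    ultimately show ?thesis
      by (auto simp: adj_def R'_def k_def fun_eq_iff)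
  qed
  have RO: "mmult X R Om = (\<lambda>S T. 0)" by (simp add: Om_def mmult_outer_left Rw)
  have OR: "mmult X Om R = (\<lambda>S T. 0)"
    using mmult_outer_right[of X w w R] projector_adj[OF p] by (simp add: Om_def Rw)
  have OO: "mmult X Om Om = (\<lambda>S T. complex_of_real c * Om S T)"
    unfolding Om_def mmult_outer_outer iww by (auto simp: outer_def fun_eq_iff)
  have kc: "k * complex_of_real c = 1" using cpos by (simp add: k_def)
  have idem: "mmult X R' R' = R'"
    unfolding R'_def
    by (simp add: mmult_add_left mmult_add_right mmult_scale_left mmult_scale_right RO OR OO
        projector_idem[OF p] fun_eq_iff)
       (metis kc mult.assoc mult.commute)
  have proj: "projector X R'" using sR' adjR' idem by (simp add: projector_def)
  have wU: "w \<in> U"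
  proof -
    have "apply_op X R u \<in> U" using rU su by (auto simp: op_range_def)
    then have "(\<lambda>S. 1 * u S + (-1) * apply_op X R u S) \<in> U" using sub uU by (intro subsp_comb)
    moreover have "(\<lambda>S. 1 * u S + (-1) * apply_op X R u S) = w" by (simp add: w_def fun_eq_iff)
    ultimately show ?thesis by simp
  qed
  have range: "op_range X R' \<subseteq> U"
  proof
    fix y assume "y \<in> op_range X R'"
    then obtain x where y: "y = apply_op X R' x" and sx: "supp_vec X x" by (auto simp: op_range_def)
    have Rx: "apply_op X R x \<in> U" using rU sx by (auto simp: op_range_def)
    have Ox: "apply_op X Om x = (\<lambda>S. inner X w x * w S)"
      using sw by (auto simp: Om_def apply_outer fun_eq_iff supp_vec_def)
    have "y = (\<lambda>S. 1 * apply_op X R x S + (k * inner X w x) * w S)"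
      unfolding y R'_def apply_add_op apply_scale_op Ox by (simp add: mult.assoc)
    then show "y \<in> U" using Rx wU sub by (simp only: subsp_comb)
  qed
  have tr: "trace X R' = trace X R + 1"
    unfolding R'_def trace_add trace_scale by (simp add: Om_def trace_outer iww kc)
  show ?thesis using proj range tr by (intro exI[of _ R']) simp
qed

lemma projector_zero: "projector X (\<lambda>S T. 0)"
  by (simp add: projector_def supp_op_def adj_def fun_eq_iff)

lemma projector_trace_bound: assumes "finite X" "projector X R" shows "Re (trace X R) \<le> real (card (Pow X))"
proof -
  have "Re (trace X R) = (\<Sum>S\<in>Pow X. Re (R S S))" by (simp add: trace_def)
  also have "\<dots> \<le> (\<Sum>S\<in>Pow X. 1)" using assms by (intro sum_mono) (auto intro: projector_diag_le1)
  finally show ?thesis by simp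
qed

lemma proj_exists: assumes fin: "finite X" and sub: "subsp X U"
  shows "\<exists>R. projector X R \<and> op_range X R = U"
proof (rule ccontr)
  assume no: "\<not> ?thesis"
  have "\<exists>R. projector X R \<and> op_range X R \<subseteq> U \<and> Re (trace X R) = real n" for n
  proof (induction n)
    case 0
    have "op_range X (\<lambda>S T. 0) \<subseteq> U" using sub by (auto simp: op_range_def subsp_def)
    then show ?case using projector_zero by (intro exI[of _ "\<lambda>S T. 0"]) (simp add: trace_def)
  next
    case (Suc n)
    then obtain R where R: "projector X R" "op_range X R \<subseteq> U" "Re (trace X R) = real n" by blast
    then have "op_range X R \<noteq> U" using no by blast
    then obtain u where "u \<in> U" "u \<notin> op_range X R" using R(2) by blast
    moreover have "supp_vec X u" using sub \<open>u \<in> U\<close> by (simp add: subsp_def)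
    ultimately have "apply_op X R u \<noteq> u" using op_range_char[OF R(1)] by auto
    from proj_extend[OF fin R(1) sub R(2) \<open>u \<in> U\<close> this] R(3) show ?case by auto
  qed
  then obtain R where "projector X R" "Re (trace X R) = real (card (Pow X) + 1)" by blast
  with projector_trace_bound[OF fin this(1)] show False by simp
qed

lemma proj_mult_same_range:
  assumes fin: "finite X" and p1: "projector X R1" and p2: "projector X R2"
    and r: "op_range X R1 = op_range X R2"
  shows "mmult X R1 R2 = R2"
proof (rule op_eq_ket[OF fin])
  show "supp_op X (mmult X R1 R2)" by simp
  show "supp_op X R2" using p2 by (simp add: projector_def)
  fix S assume "S \<subseteq> X"
  have "apply_op X R2 (ket S) \<in> op_range X R1" using r by (auto simp: op_range_def supp_ket \<open>S \<subseteq> X\<close>)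
  then have "apply_op X R1 (apply_op X R2 (ket S)) = apply_op X R2 (ket S)"
    using op_range_char[OF p1] by auto
  then show "apply_op X (mmult X R1 R2) (ket S) = apply_op X R2 (ket S)" by (simp add: apply_mmult)
qed

lemma proj_unique:
  assumes fin: "finite X" and p1: "projector X R1" and p2: "projector X R2"
    and r: "op_range X R1 = op_range X R2"
  shows "R1 = R2"
proof -
  have "R2 = adj R2" using projector_adj[OF p2] by simp
  also have "\<dots> = adj (mmult X R1 R2)" using proj_mult_same_range[OF assms] by simp
  also have "\<dots> = mmult X R2 R1" by (simp add: adj_mmult projector_adj[OF p1] projector_adj[OF p2])
  also have "\<dots> = R1" using proj_mult_same_range[OF fin p2 p1 r[symmetric]] .
  finally show ?thesis by simp
qed

lemma proj_of_props: assumes "finite X" "subsp X U"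
  shows "projector X (proj_of X U) \<and> op_range X (proj_of X U) = U"
proof -
  obtain R where R: "projector X R" "op_range X R = U" using proj_exists[OF assms] by blast
  have "\<exists>!P. projector X P \<and> op_range X P = U"
    using R proj_unique[OF assms(1)] by blast
  then show ?thesis unfolding proj_of_def by (rule theI')
qed

lemma proj_of_eq: assumes "finite X" "projector X R" "op_range X R = U"
  shows "proj_of X U = R"
proof -
  have "\<exists>!P. projector X P \<and> op_range X P = U"
    using assms proj_unique[OF assms(1)] by blast
  then show ?thesis unfolding proj_of_def using assms by (intro the1_equality) auto
qed

lemma psd_kernel:
  assumes fin: "finite X" and sB: "supp_op X B" and aB: "adj B = B"
    and pos: "\<And>\<phi>. supp_vec X \<phi> \<Longrightarrow> Re (inner X \<phi> (apply_op X B \<phi>)) \<ge> 0"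
    and s\<psi>: "supp_vec X \<psi>" and z: "Re (inner X \<psi> (apply_op X B \<psi>)) = 0"
  shows "apply_op X B \<psi> = (\<lambda>S. 0)"
proof -
  define v where "v = apply_op X B \<psi>"
  define a where "a = Re (inner X v v)"
  define b where "b = Re (inner X v (apply_op X B v))"
  have sv: "supp_vec X v" by (simp add: v_def)
  have a0: "a \<ge> 0" by (simp add: a_def inner_self_Re)
  have b0: "b \<ge> 0" using pos[OF sv] by (simp add: b_def)
  have ipv: "inner X \<psi> (apply_op X B v) = inner X v v"
    by (simp add: inner_adj aB v_def)
  have key: "0 \<le> - 2 * t * a + t * t * b" for t :: real
  proof -
    define x where "x = (\<lambda>S. 1 * \<psi> S + (- complex_of_real t) * v S)"
    have sx: "supp_vec X x" using s\<psi> sv by (auto simp: x_def supp_vec_def)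
    have Bx: "apply_op X B x = (\<lambda>S. 1 * v S + (- complex_of_real t) * apply_op X B v S)"
      unfolding x_def apply_lin v_def ..
    have eq: "inner X x (apply_op X B x) = inner X \<psi> v - complex_of_real t * inner X v v
        - complex_of_real t * (inner X v v - complex_of_real t * inner X v (apply_op X B v))"
      unfolding Bx unfolding x_def inner_lin_left inner_lin_right ipv by (simp add: algebra_simps)
    have "Re (inner X x (apply_op X B x)) = Re (inner X \<psi> v - complex_of_real t * inner X v v
        - complex_of_real t * (inner X v v - complex_of_real t * inner X v (apply_op X B v)))"
      by (simp only: eq)
    also have "\<dots> = Re (inner X \<psi> v) - 2 * t * a + t * t * b"
      by (simp add: a_def b_def algebra_simps)
    finally have "Re (inner X x (apply_op X B x)) = Re (inner X \<psi> v) - 2 * t * a + t * t * b" .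
    moreover have "Re (inner X \<psi> v) = 0" using z by (simp add: v_def)
    ultimately show ?thesis using pos[OF sx] by simp
  qed
  have "a = 0"
  proof (rule ccontr)
    assume "a \<noteq> 0"
    then have apos: "a > 0" using a0 by simp
    define t where "t = a / (b + 1)"
    have "0 \<le> - 2 * t * a + t * t * b" by (rule key)
    then have "0 \<le> (- 2 * t * a + t * t * b) * (b + 1) * (b + 1)" using b0 by simp
    have tb: "t * (b + 1) = a" using b0 by (simp add: t_def)
    have "(- 2 * t * a + t * t * b) * (b + 1) * (b + 1) = - 2 * a * (t * (b+1)) * (b+1) + (t*(b+1)) * (t*(b+1)) * b"
      by (simp add: algebra_simps)
    also have "\<dots> = - a * a * (b + 2)" unfolding tb by (simp add: algebra_simps)
    finally have "(- 2 * t * a + t * t * b) * (b + 1) * (b + 1) = - a * a * (b + 2)" .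
    with \<open>0 \<le> (- 2 * t * a + t * t * b) * (b + 1) * (b + 1)\<close>
    have "0 \<le> - a * a * (b + 2)" by simp
    then have "a * a * (b + 2) \<le> 0" by simp
    moreover have "a * a * (b + 2) > 0" using apos b0 by simp
    ultimately show False by simp
  qed
  then show ?thesis using inner_self_zero[OF fin sv] by (simp add: a_def v_def)
qed



definition blk :: "qvar set \<Rightarrow> qvar set \<Rightarrow> qvar set \<Rightarrow> op \<Rightarrow> op" where
  "blk V a b \<rho> = (\<lambda>S' T'. if S' \<subseteq> V \<and> T' \<subseteq> V then \<rho> (S' \<union> a) (T' \<union> b) else 0)"

definition vblk :: "qvar set \<Rightarrow> qvar set \<Rightarrow> vec \<Rightarrow> vec" where
  "vblk V a \<psi> = (\<lambda>s. if s \<subseteq> V then \<psi> (s \<union> a) else 0)"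

lemma ext_so_blk: "ext_so V X E \<rho> = (\<lambda>S T. if S \<subseteq> X \<and> T \<subseteq> X then E (blk V (S - V) (T - V) \<rho>) (S \<inter> V) (T \<inter> V) else 0)"
  unfolding ext_so_def blk_def by (rule refl)

lemma sum_Pow_fiber:
  assumes "finite X" "V \<subseteq> X" "a \<subseteq> X" "a \<inter> V = {}"
  shows "(\<Sum>U\<in>Pow X. if U - V = a then g U else 0) = (\<Sum>u\<in>Pow V. g (u \<union> a))"
proof -
  have "(\<Sum>U\<in>Pow X. if U - V = a then g U else 0) = (\<Sum>U\<in>{U\<in>Pow X. U - V = a}. g U)"
    using assms(1) sum.inter_filter[of "Pow X" g "\<lambda>U. U - V = a"] by simp
  also have "\<dots> = (\<Sum>u\<in>Pow V. g (u \<union> a))"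
    by (rule sum.reindex_bij_witness[where i="\<lambda>u. u \<union> a" and j="\<lambda>U. U \<inter> V"]) (use assms in \<open>auto simp: Int_Diff_Un\<close>)
  finally show ?thesis .
qed

lemma sum_Pow_split:
  assumes "finite X" "V \<subseteq> X"
  shows "(\<Sum>S\<in>Pow X. g S) = (\<Sum>a\<in>Pow (X - V). \<Sum>s\<in>Pow V. g (s \<union> a))"
proof -
  have "(\<Sum>a\<in>Pow (X - V). \<Sum>s\<in>Pow V. g (s \<union> a)) = (\<Sum>(a, s)\<in>Pow (X - V) \<times> Pow V. g (s \<union> a))"
    by (rule sum.cartesian_product)
  also have "\<dots> = (\<Sum>S\<in>Pow X. g S)"
    by (rule sum.reindex_bij_witness[where i="\<lambda>S. (S - V, S \<inter> V)" and j="\<lambda>(a, s). s \<union> a"])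
       (use assms in auto)
  finally show ?thesis by simp
qed

lemma ext_sum_left:
  assumes "finite X" "V \<subseteq> X" "S \<subseteq> X"
  shows "(\<Sum>U\<in>Pow X. ext_op V X K S U * f U) = (\<Sum>u\<in>Pow V. K (S \<inter> V) u * f (u \<union> (S - V)))"
proof -
  have "(\<Sum>U\<in>Pow X. ext_op V X K S U * f U) = (\<Sum>U\<in>Pow X. if U - V = S - V then K (S \<inter> V) (U \<inter> V) * f U else 0)"
    using assms by (intro sum.cong) (auto simp: ext_op_def)
  also have "\<dots> = (\<Sum>u\<in>Pow V. K (S \<inter> V) ((u \<union> (S - V)) \<inter> V) * f (u \<union> (S - V)))"
    using assms by (intro sum_Pow_fiber) auto
  also have "\<dots> = (\<Sum>u\<in>Pow V. K (S \<inter> V) u * f (u \<union> (S - V)))"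
  proof (intro sum.cong refl)
    fix u assume "u \<in> Pow V" then have "(u \<union> (S - V)) \<inter> V = u" by auto
    then show "K (S \<inter> V) ((u \<union> (S - V)) \<inter> V) * f (u \<union> (S - V)) = K (S \<inter> V) u * f (u \<union> (S - V))" by simp
  qed
  finally show ?thesis .
qed

lemma ext_sum_right:
  assumes "finite X" "V \<subseteq> X" "T \<subseteq> X"
  shows "(\<Sum>U\<in>Pow X. f U * ext_op V X K U T) = (\<Sum>u\<in>Pow V. f (u \<union> (T - V)) * K u (T \<inter> V))"
proof -
  have "(\<Sum>U\<in>Pow X. f U * ext_op V X K U T) = (\<Sum>U\<in>Pow X. if U - V = T - V then f U * K (U \<inter> V) (T \<inter> V) else 0)"
    using assms by (intro sum.cong) (auto simp: ext_op_def)
  also have "\<dots> = (\<Sum>u\<in>Pow V. f (u \<union> (T - V)) * K ((u \<union> (T - V)) \<inter> V) (T \<inter> V))"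
    using assms by (intro sum_Pow_fiber) auto
  also have "\<dots> = (\<Sum>u\<in>Pow V. f (u \<union> (T - V)) * K u (T \<inter> V))"
  proof (intro sum.cong refl)
    fix u assume "u \<in> Pow V" then have "(u \<union> (T - V)) \<inter> V = u" by auto
    then show "f (u \<union> (T - V)) * K ((u \<union> (T - V)) \<inter> V) (T \<inter> V) = f (u \<union> (T - V)) * K u (T \<inter> V)" by simp
  qed
  finally show ?thesis .
qed

lemma supp_ext[simp]: "supp_op X (ext_op V X A)"
  by (simp add: supp_op_def ext_op_def)

lemma ext_apply:
  assumes "finite X" "V \<subseteq> X"
  shows "apply_op X (ext_op V X A) \<psi> = (\<lambda>S. if S \<subseteq> X then apply_op V A (vblk V (S - V) \<psi>) (S \<inter> V) else 0)"
proof (intro ext)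
  fix S show "apply_op X (ext_op V X A) \<psi> S = (if S \<subseteq> X then apply_op V A (vblk V (S - V) \<psi>) (S \<inter> V) else 0)"
  proof (cases "S \<subseteq> X")
    case True
    then show ?thesis using assms
      by (simp add: apply_op_def ext_sum_left vblk_def)
  qed (simp add: apply_op_def)
qed

lemma vblk_ext_apply:
  assumes "finite X" "V \<subseteq> X" "a \<subseteq> X - V"
  shows "vblk V a (apply_op X (ext_op V X A) \<psi>) = apply_op V A (vblk V a \<psi>)"
proof (intro ext)
  fix s show "vblk V a (apply_op X (ext_op V X A) \<psi>) s = apply_op V A (vblk V a \<psi>) s"
  proof (cases "s \<subseteq> V")
    case True
    have e1: "(s \<union> a) - V = a" "(s \<union> a) \<inter> V = s" using True assms(3) by auto
    have "s \<union> a \<subseteq> X" using True assms by auto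
    then show ?thesis using True by (simp add: vblk_def ext_apply[OF assms(1,2)] e1)
  qed (simp add: vblk_def apply_op_def)
qed

lemma vec_eq_blocks:
  assumes "V \<subseteq> X" "supp_vec X \<psi>" "supp_vec X \<phi>" "\<And>a. a \<subseteq> X - V \<Longrightarrow> vblk V a \<psi> = vblk V a \<phi>"
  shows "\<psi> = \<phi>"
proof (intro ext)
  fix S show "\<psi> S = \<phi> S"
  proof (cases "S \<subseteq> X")
    case True
    have "S - V \<subseteq> X - V" using True by auto
    then have "vblk V (S - V) \<psi> = vblk V (S - V) \<phi>" by (rule assms(4))
    then have "vblk V (S - V) \<psi> (S \<inter> V) = vblk V (S - V) \<phi> (S \<inter> V)" by simp
    moreover have "S \<inter> V \<union> (S - V) = S" by auto
    ultimately show ?thesis by (simp add: vblk_def)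
  qed (use assms(2,3) in \<open>auto simp: supp_vec_def\<close>)
qed

lemma ext_mult:
  assumes "finite X" "V \<subseteq> X"
  shows "mmult X (ext_op V X A) (ext_op V X B) = ext_op V X (mmult V A B)"
proof (intro ext)
  fix S T
  show "mmult X (ext_op V X A) (ext_op V X B) S T = ext_op V X (mmult V A B) S T"
  proof (cases "S \<subseteq> X \<and> T \<subseteq> X")
    case True
    have "mmult X (ext_op V X A) (ext_op V X B) S T = (\<Sum>u\<in>Pow V. A (S \<inter> V) u * ext_op V X B (u \<union> (S - V)) T)"
      using True assms by (simp add: mmult_def ext_sum_left)
    also have "\<dots> = (\<Sum>u\<in>Pow V. A (S \<inter> V) u * (B u (T \<inter> V) * (if S - V = T - V then 1 else 0)))"
    proof (intro sum.cong refl)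
      fix u assume "u \<in> Pow V"
      then have h: "(u \<union> (S - V)) \<inter> V = u" "(u \<union> (S - V)) - V = S - V" "u \<union> (S - V) \<subseteq> X"
        using True assms by auto
      show "A (S \<inter> V) u * ext_op V X B (u \<union> (S - V)) T = A (S \<inter> V) u * (B u (T \<inter> V) * (if S - V = T - V then 1 else 0))"
        unfolding ext_op_def h using True h(3) by simp
    qed
    also have "\<dots> = ext_op V X (mmult V A B) S T"
      using True by (simp add: ext_op_def mmult_def sum_distrib_right ac_simps)
    finally show ?thesis .
  qed (auto simp: mmult_def ext_op_def)
qed

lemma ext_adj: "adj (ext_op V X A) = ext_op V X (adj A)"
  by (auto simp: adj_def ext_op_def fun_eq_iff)

lemma ext_ext:
  assumes "V \<subseteq> W" "W \<subseteq> X"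
  shows "ext_op W X (ext_op V W K) = ext_op V X K"
proof (intro ext)
  fix S T
  have a: "S \<inter> W \<inter> V = S \<inter> V" "T \<inter> W \<inter> V = T \<inter> V" using assms by auto
  have b: "(S \<inter> W - V = T \<inter> W - V \<and> S - W = T - W) \<longleftrightarrow> S - V = T - V" using assms by blast
  show "ext_op W X (ext_op V W K) S T = ext_op V X K S T"
    using assms a b by (auto simp: ext_op_def)
qed

lemma ext_idop: "ext_op V X (idop V) = idop X"
proof (intro ext)
  fix S T
  have "(S \<inter> V = T \<inter> V \<and> S - V = T - V) \<longleftrightarrow> S = T" by blast
  then show "ext_op V X (idop V) S T = idop X S T" by (auto simp: ext_op_def idop_def)
qed

lemma ext_diff: "ext_op V X (A - B) = ext_op V X A - ext_op V X B"
  by (auto simp: ext_op_def fun_eq_iff algebra_simps)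

lemma ext_self: "supp_op V A \<Longrightarrow> ext_op V V A = A"
  by (auto simp: ext_op_def fun_eq_iff supp_op_def Int_absorb2)

lemma ext_zero[simp]: "ext_op V X (\<lambda>S T. 0) = (\<lambda>S T. 0)"
  by (auto simp: ext_op_def fun_eq_iff)

lemma ext_lin: "ext_op V X (\<lambda>S T. \<Sum>K\<in>F. c K * K S T) = (\<lambda>S T. \<Sum>K\<in>F. c K * ext_op V X K S T)"
proof (intro ext)
  fix S T show "ext_op V X (\<lambda>S T. \<Sum>K\<in>F. c K * K S T) S T = (\<Sum>K\<in>F. c K * ext_op V X K S T)"
  proof (cases "S \<subseteq> X \<and> T \<subseteq> X")
    case False
    then have c: "(S \<subseteq> X \<and> T \<subseteq> X) = False" by simp
    show ?thesis by (simp only: ext_op_def c if_False mult_zero_right sum.neutral_const)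
  qed (simp_all add: ext_op_def sum_distrib_right ac_simps)
qed

lemma sandwich_ext_entry:
  assumes "finite X" "V \<subseteq> X" "S \<subseteq> X" "T \<subseteq> X"
  shows "mmult X (mmult X (ext_op V X K) \<rho>) (adj (ext_op V X K)) S T
       = mmult V (mmult V K (blk V (S - V) (T - V) \<rho>)) (adj K) (S \<inter> V) (T \<inter> V)"
proof -
  have "mmult X (mmult X (ext_op V X K) \<rho>) (adj (ext_op V X K)) S T
      = (\<Sum>U'\<in>Pow X. (\<Sum>U\<in>Pow X. ext_op V X K S U * \<rho> U U') * cnj (ext_op V X K T U'))"
    using assms by (simp add: mmult_def adj_def)
  also have "\<dots> = (\<Sum>U'\<in>Pow X. (\<Sum>u\<in>Pow V. K (S \<inter> V) u * \<rho> (u \<union> (S - V)) U') * cnj (ext_op V X K T U'))"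
    using assms by (simp add: ext_sum_left)
  also have "\<dots> = (\<Sum>U'\<in>Pow X. (\<Sum>u\<in>Pow V. K (S \<inter> V) u * \<rho> (u \<union> (S - V)) U') * adj (ext_op V X K) U' T)"
    by (simp add: adj_def)
  also have "\<dots> = (\<Sum>u'\<in>Pow V. (\<Sum>u\<in>Pow V. K (S \<inter> V) u * \<rho> (u \<union> (S - V)) (u' \<union> (T - V))) * adj K u' (T \<inter> V))"
    using assms by (simp add: ext_adj ext_sum_right)
  also have "\<dots> = mmult V (mmult V K (blk V (S - V) (T - V) \<rho>)) (adj K) (S \<inter> V) (T \<inter> V)"
    by (simp add: mmult_def blk_def)
  finally show ?thesis .
qed

lemma sum_list_fun: "(\<lambda>S T. \<Sum>K\<leftarrow>Ks. f K S T) S T = (\<Sum>K\<leftarrow>Ks. f K S T)" by simp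

lemma ext_so_kraus:
  assumes "finite X" "V \<subseteq> X" "kraus_rep V Ks E"
  shows "ext_so V X E \<rho> = (\<lambda>S T. \<Sum>K\<leftarrow>Ks. mmult X (mmult X (ext_op V X K) \<rho>) (adj (ext_op V X K)) S T)"
proof (intro ext)
  fix S T
  have E: "E = (\<lambda>\<rho> S T. \<Sum>K\<leftarrow>Ks. mmult V (mmult V K \<rho>) (adj K) S T)" using assms(3) by (simp add: kraus_rep_def)
  show "ext_so V X E \<rho> S T = (\<Sum>K\<leftarrow>Ks. mmult X (mmult X (ext_op V X K) \<rho>) (adj (ext_op V X K)) S T)"
  proof (cases "S \<subseteq> X \<and> T \<subseteq> X")
    case True
    then show ?thesis using assms(1,2) by (simp add: ext_so_blk E sandwich_ext_entry)
  next
    case False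
    then have c: "(S \<subseteq> X \<and> T \<subseteq> X) = False" by simp
    show ?thesis by (simp only: ext_so_blk mmult_def c if_False sum_list_0)
  qed
qed



lemma trace_blocks:
  assumes "finite X" "V \<subseteq> X"
  shows "trace X (ext_so V X E \<rho>) = (\<Sum>a\<in>Pow (X - V). trace V (E (blk V a a \<rho>)))"
proof -
  have "trace X (ext_so V X E \<rho>) = (\<Sum>S\<in>Pow X. E (blk V (S - V) (S - V) \<rho>) (S \<inter> V) (S \<inter> V))"
    by (simp add: trace_def ext_so_blk)
  also have "\<dots> = (\<Sum>a\<in>Pow (X - V). \<Sum>s\<in>Pow V. E (blk V ((s \<union> a) - V) ((s \<union> a) - V) \<rho>) ((s \<union> a) \<inter> V) ((s \<union> a) \<inter> V))"
    by (rule sum_Pow_split[OF assms])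
  also have "\<dots> = (\<Sum>a\<in>Pow (X - V). trace V (E (blk V a a \<rho>)))"
    unfolding trace_def
  proof (intro sum.cong refl)
    fix a s assume "a \<in> Pow (X - V)" "s \<in> Pow V"
    then have "(s \<union> a) - V = a" "(s \<union> a) \<inter> V = s" by auto
    then show "E (blk V ((s \<union> a) - V) ((s \<union> a) - V) \<rho>) ((s \<union> a) \<inter> V) ((s \<union> a) \<inter> V) = E (blk V a a \<rho>) s s" by simp
  qed
  finally show ?thesis .
qed

lemma trace_blocks_id:
  assumes "finite X" "V \<subseteq> X"
  shows "trace X \<rho> = (\<Sum>a\<in>Pow (X - V). trace V (blk V a a \<rho>))"
proof -
  have "trace X \<rho> = (\<Sum>a\<in>Pow (X - V). \<Sum>s\<in>Pow V. \<rho> (s \<union> a) (s \<union> a))"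
    unfolding trace_def by (rule sum_Pow_split[OF assms])
  also have "\<dots> = (\<Sum>a\<in>Pow (X - V). trace V (blk V a a \<rho>))"
    by (simp add: trace_def blk_def)
  finally show ?thesis .
qed

lemma un_int: "t \<subseteq> V \<Longrightarrow> a \<inter> V = {} \<Longrightarrow> (t \<union> a) \<inter> V = t" by auto

definition lift :: "qvar set \<Rightarrow> qvar set \<Rightarrow> qvar set \<Rightarrow> vec \<Rightarrow> vec" where
  "lift V X a \<phi> = (\<lambda>S. if S \<subseteq> X \<and> S - V = a then \<phi> (S \<inter> V) else 0)"

lemma inner_lift:
  assumes "finite X" "V \<subseteq> X" "a \<subseteq> X - V"
  shows "inner X (lift V X a \<phi>) w = inner V \<phi> (vblk V a w)"
proof -
  have "inner X (lift V X a \<phi>) w = (\<Sum>S\<in>Pow X. if S - V = a then cnj (\<phi> (S \<inter> V)) * w S else 0)"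
    unfolding inner_def lift_def by (intro sum.cong) auto
  also have "\<dots> = (\<Sum>s\<in>Pow V. cnj (\<phi> ((s \<union> a) \<inter> V)) * w (s \<union> a))"
    using assms by (intro sum_Pow_fiber) auto
  also have "\<dots> = inner V \<phi> (vblk V a w)"
    unfolding inner_def vblk_def
  proof (intro sum.cong refl)
    fix s assume "s \<in> Pow V" then have "(s \<union> a) \<inter> V = s" using assms by auto
    then show "cnj (\<phi> ((s \<union> a) \<inter> V)) * w (s \<union> a) = cnj (\<phi> s) * (if s \<subseteq> V then w (s \<union> a) else 0)"
      using \<open>s \<in> Pow V\<close> by simp
  qed
  finally show ?thesis .
qed

lemma vblk_apply_lift:
  assumes "finite X" "V \<subseteq> X" "a \<subseteq> X - V"
  shows "vblk V a (apply_op X \<sigma> (lift V X a \<phi>)) = apply_op V (blk V a a \<sigma>) \<phi>"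
proof (intro ext)
  fix s show "vblk V a (apply_op X \<sigma> (lift V X a \<phi>)) s = apply_op V (blk V a a \<sigma>) \<phi> s"
  proof (cases "s \<subseteq> V")
    case True
    then have sX: "s \<union> a \<subseteq> X" using assms by auto
    have "vblk V a (apply_op X \<sigma> (lift V X a \<phi>)) s = (\<Sum>T\<in>Pow X. if T - V = a then \<sigma> (s \<union> a) T * \<phi> (T \<inter> V) else 0)"
      using True sX unfolding vblk_def apply_op_def lift_def by (auto intro!: sum.cong)
    also have "\<dots> = (\<Sum>t\<in>Pow V. \<sigma> (s \<union> a) (t \<union> a) * \<phi> ((t \<union> a) \<inter> V))"
      using assms by (intro sum_Pow_fiber) auto
    also have "\<dots> = apply_op V (blk V a a \<sigma>) \<phi> s"
    proof -
      have d: "a \<inter> V = {}" using assms by auto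
      show ?thesis unfolding apply_op_def blk_def using True d by (auto intro!: sum.cong simp: un_int)
    qed
    finally show ?thesis .
  qed (simp add: vblk_def apply_op_def)
qed

lemma supp_lift: "supp_vec X (lift V X a \<phi>)"
  by (simp add: supp_vec_def lift_def)

lemma vblk_lift: assumes "supp_vec V \<phi>" "V \<subseteq> X" "a \<subseteq> X - V" shows "vblk V a (lift V X a \<phi>) = \<phi>"
proof (intro ext)
  fix s show "vblk V a (lift V X a \<phi>) s = \<phi> s"
  proof (cases "s \<subseteq> V")
    case True then have "(s \<union> a) \<inter> V = s" "(s \<union> a) - V = a" "s \<union> a \<subseteq> X" using assms by auto
    then show ?thesis using True by (simp add: vblk_def lift_def)
  qed (use assms in \<open>auto simp: vblk_def supp_vec_def\<close>)
qed

lemma blk_pos: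
  assumes "finite X" "V \<subseteq> X" "a \<subseteq> X - V" "positive_op X \<sigma>"
  shows "positive_op V (blk V a a \<sigma>)"
  unfolding positive_op_def
proof (intro conjI allI impI)
  show "supp_op V (blk V a a \<sigma>)" by (simp add: supp_op_def blk_def)
  fix \<phi> assume s\<phi>: "supp_vec V \<phi>"
  have e: "inner V \<phi> (apply_op V (blk V a a \<sigma>) \<phi>) = inner X (lift V X a \<phi>) (apply_op X \<sigma> (lift V X a \<phi>))"
    using assms by (simp add: inner_lift vblk_apply_lift)
  show "inner V \<phi> (apply_op V (blk V a a \<sigma>) \<phi>) \<in> \<real>" unfolding e using assms(4) supp_lift
    by (simp add: positive_op_def)
  show "0 \<le> Re (inner V \<phi> (apply_op V (blk V a a \<sigma>) \<phi>))" unfolding e using assms(4) supp_lift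
    by (simp add: positive_op_def)
qed

lemma TN_X:
  assumes "finite X" "V \<subseteq> X" "dprog V E" "positive_op X \<sigma>"
  shows "Re (trace X (ext_so V X E \<sigma>)) \<le> Re (trace X \<sigma>)"
proof -
  have "Re (trace X (ext_so V X E \<sigma>)) = (\<Sum>a\<in>Pow (X - V). Re (trace V (E (blk V a a \<sigma>))))"
    using assms by (simp add: trace_blocks)
  also have "\<dots> \<le> (\<Sum>a\<in>Pow (X - V). Re (trace V (blk V a a \<sigma>)))"
    using assms blk_pos by (intro sum_mono) (auto simp: dprog_def)
  also have "\<dots> = Re (trace X \<sigma>)" using assms by (simp add: trace_blocks_id)
  finally show ?thesis .
qed

lemma trace_sum_list: "trace X (\<lambda>S T. \<Sum>K\<leftarrow>Ks. f K S T) = (\<Sum>K\<leftarrow>Ks. trace X (f K))"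
  by (induction Ks) (simp_all add: trace_def sum.distrib)

lemma mmult_sum_list_right: "mmult X Q (\<lambda>S T. \<Sum>K\<leftarrow>Ks. f K S T) = (\<lambda>S T. \<Sum>K\<leftarrow>Ks. mmult X Q (f K) S T)"
proof (induction Ks)
  case Nil then show ?case by simp
next
  case (Cons K Ks)
  have "mmult X Q (\<lambda>S T. \<Sum>K\<leftarrow>K # Ks. f K S T) = mmult X Q (\<lambda>S T. f K S T + (\<lambda>S T. \<Sum>K\<leftarrow>Ks. f K S T) S T)"
    by simp
  also have "\<dots> = (\<lambda>S T. mmult X Q (f K) S T + mmult X Q (\<lambda>S T. \<Sum>K\<leftarrow>Ks. f K S T) S T)"
    by (rule mmult_add_right)
  finally show ?case using Cons by simp
qed

lemma sum_list_nonneg_zero: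
  fixes f :: "'a \<Rightarrow> real"
  assumes "\<And>x. x \<in> set xs \<Longrightarrow> f x \<ge> 0" "(\<Sum>x\<leftarrow>xs. f x) \<le> 0"
  shows "\<And>x. x \<in> set xs \<Longrightarrow> f x = 0"
  using assms
proof (induction xs)
  case Nil then show ?case by simp
next
  case (Cons y ys)
  have "(\<Sum>x\<leftarrow>ys. f x) \<ge> 0" using Cons.prems(2) by (intro sum_list_nonneg) auto
  moreover have "f y \<ge> 0" using Cons.prems(2) by simp
  ultimately have "f y = 0" "(\<Sum>x\<leftarrow>ys. f x) \<le> 0" using Cons.prems(3) by auto
  then show ?case using Cons by auto
qed

lemma sum_list_Re: "Re (\<Sum>x\<leftarrow>xs. f x) = (\<Sum>x\<leftarrow>xs. Re (f x))"
  by (induction xs) simp_all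

lemma sum_list_mono_real:
  fixes f g :: "'a \<Rightarrow> real"
  shows "(\<And>x. x \<in> set xs \<Longrightarrow> f x \<le> g x) \<Longrightarrow> (\<Sum>x\<leftarrow>xs. f x) \<le> (\<Sum>x\<leftarrow>xs. g x)"
  by (induction xs) (auto intro: add_mono)

lemma trace_proj_sandwich:
  assumes "projector X Q"
  shows "trace X (mmult X Q (mmult X (mmult X A \<rho>) (adj A)))
       = trace X (mmult X (mmult X (mmult X Q A) \<rho>) (adj (mmult X Q A)))"
proof -
  define M where "M = mmult X (mmult X A \<rho>) (adj A)"
  have e: "mmult X (mmult X (mmult X Q A) \<rho>) (adj (mmult X Q A)) = mmult X (mmult X Q M) Q"
    by (simp add: M_def adj_mmult projector_adj[OF assms] mmult_assoc)
  have "trace X (mmult X (mmult X Q M) Q) = trace X (mmult X Q (mmult X Q M))"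
    by (rule trace_comm)
  also have "\<dots> = trace X (mmult X (mmult X Q Q) M)"
    by (simp only: mmult_assoc)
  also have "\<dots> = trace X (mmult X Q M)"
    by (simp only: projector_idem[OF assms])
  finally show ?thesis unfolding e M_def by simp
qed

lemma projector_ext:
  assumes "finite X" "W \<subseteq> X" "projector W P"
  shows "projector X (ext_op W X P)"
  using assms by (simp add: projector_def ext_adj ext_mult)

lemma pos_value_Q:
  assumes "finite X" "V \<subseteq> X" "kraus_rep V Ks E" "projector X Q" "positive_op X \<rho>"
  shows "Re (trace X (mmult X Q (ext_so V X E \<rho>))) \<ge> 0"
proof -
  have "trace X (mmult X Q (ext_so V X E \<rho>)) =
     (\<Sum>K\<leftarrow>Ks. trace X (mmult X Q (mmult X (mmult X (ext_op V X K) \<rho>) (adj (ext_op V X K)))))"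
    by (simp only: ext_so_kraus[OF assms(1,2,3)] mmult_sum_list_right trace_sum_list)
  also have "\<dots> = (\<Sum>K\<leftarrow>Ks. trace X (mmult X (mmult X (mmult X Q (ext_op V X K)) \<rho>) (adj (mmult X Q (ext_op V X K)))))"
    by (simp only: trace_proj_sandwich[OF assms(4)])
  finally have "Re (trace X (mmult X Q (ext_so V X E \<rho>))) =
     (\<Sum>K\<leftarrow>Ks. Re (trace X (mmult X (mmult X (mmult X Q (ext_op V X K)) \<rho>) (adj (mmult X Q (ext_op V X K))))))"
    by (simp only: sum_list_Re)
  also have "\<dots> \<ge> 0" using assms(5) by (intro sum_list_nonneg) (auto simp: pos_sandwich_trace)
  finally show ?thesis .
qed

lemma kraus_exists: "dprog V E \<Longrightarrow> \<exists>Ks. kraus_rep V Ks E"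
  by (simp add: dprog_def)

lemma valid_tot_iff:
  assumes fV: "finite V" and ne: "\<E> \<noteq> {}" and dp: "\<And>E. E \<in> \<E> \<Longrightarrow> dprog V E"
    and fW: "finite W" and pQ: "projector W Q"
  shows "valid_tot V \<E> W P Q \<longleftrightarrow> (\<forall>X \<rho> E. finite X \<and> V \<union> W \<subseteq> X \<and> density X \<rho> \<and> E \<in> \<E> \<longrightarrow>
      Re (trace X (mmult X (ext_op W X P) \<rho>)) \<le> Re (trace X (mmult X (ext_op W X Q) (ext_so V X E \<rho>))))"
proof -
  have bdd: "bdd_below ((\<lambda>E. Re (trace X (mmult X (ext_op W X Q) (ext_so V X E \<rho>)))) ` \<E>)"
    if X: "finite X" "V \<union> W \<subseteq> X" "density X \<rho>" for X \<rho>
  proof (rule bdd_belowI[of _ 0])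
    fix y assume "y \<in> (\<lambda>E. Re (trace X (mmult X (ext_op W X Q) (ext_so V X E \<rho>)))) ` \<E>"
    then obtain E where E: "E \<in> \<E>" "y = Re (trace X (mmult X (ext_op W X Q) (ext_so V X E \<rho>)))" by auto
    obtain Ks where Ks: "kraus_rep V Ks E" using dp[OF E(1)] by (auto simp: dprog_def)
    have pQX: "projector X (ext_op W X Q)" using X pQ by (intro projector_ext) auto
    have "positive_op X \<rho>" using X by (simp add: density_def)
    from pos_value_Q[OF X(1) _ Ks pQX this] X(2) show "0 \<le> y" using E(2) by simp
  qed
  show ?thesis
  proof (intro iffI allI impI)
    fix X \<rho> E assume v: "valid_tot V \<E> W P Q" and c: "finite X \<and> V \<union> W \<subseteq> X \<and> density X \<rho> \<and> E \<in> \<E>"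
    then have "Re (trace X (mmult X (ext_op W X P) \<rho>)) \<le> (INF E\<in>\<E>. Re (trace X (mmult X (ext_op W X Q) (ext_so V X E \<rho>))))"
      unfolding valid_tot_def by blast
    then show "Re (trace X (mmult X (ext_op W X P) \<rho>)) \<le> Re (trace X (mmult X (ext_op W X Q) (ext_so V X E \<rho>)))"
      using le_cINF_iff[OF ne bdd] c by blast
  next
    assume h: "\<forall>X \<rho> E. finite X \<and> V \<union> W \<subseteq> X \<and> density X \<rho> \<and> E \<in> \<E> \<longrightarrow>
      Re (trace X (mmult X (ext_op W X P) \<rho>)) \<le> Re (trace X (mmult X (ext_op W X Q) (ext_so V X E \<rho>)))"
    show "valid_tot V \<E> W P Q" unfolding valid_tot_def
    proof (intro allI impI)
      fix X \<rho> assume c: "finite X \<and> V \<union> W \<subseteq> X \<and> density X \<rho>"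
      show "Re (trace X (mmult X (ext_op W X P) \<rho>)) \<le> (INF E\<in>\<E>. Re (trace X (mmult X (ext_op W X Q) (ext_so V X E \<rho>))))"
        using h c by (intro cINF_greatest[OF ne]) blast
    qed
  qed
qed

lemma valid_par_iff:
  assumes fV: "finite V" and ne: "\<E> \<noteq> {}" and dp: "\<And>E. E \<in> \<E> \<Longrightarrow> dprog V E"
    and fW: "finite W" and pQ: "projector W Q"
  shows "valid_par V \<E> W P Q \<longleftrightarrow> (\<forall>X \<rho> E. finite X \<and> V \<union> W \<subseteq> X \<and> density X \<rho> \<and> E \<in> \<E> \<longrightarrow>
      Re (trace X (mmult X (ext_op W X P) \<rho>)) \<le> Re (trace X (mmult X (ext_op W X Q) (ext_so V X E \<rho>)))
         + Re (trace X \<rho>) - Re (trace X (ext_so V X E \<rho>)))"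
proof -
  have bdd: "bdd_below ((\<lambda>E. Re (trace X (mmult X (ext_op W X Q) (ext_so V X E \<rho>)))
         + Re (trace X \<rho>) - Re (trace X (ext_so V X E \<rho>))) ` \<E>)"
    if X: "finite X" "V \<union> W \<subseteq> X" "density X \<rho>" for X \<rho>
  proof (rule bdd_belowI[of _ 0])
    fix y assume "y \<in> (\<lambda>E. Re (trace X (mmult X (ext_op W X Q) (ext_so V X E \<rho>)))
         + Re (trace X \<rho>) - Re (trace X (ext_so V X E \<rho>))) ` \<E>"
    then obtain E where E: "E \<in> \<E>" "y = Re (trace X (mmult X (ext_op W X Q) (ext_so V X E \<rho>)))
         + Re (trace X \<rho>) - Re (trace X (ext_so V X E \<rho>))" by auto
    obtain Ks where Ks: "kraus_rep V Ks E" using dp[OF E(1)] by (auto simp: dprog_def)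
    have pQX: "projector X (ext_op W X Q)" using X pQ by (intro projector_ext) auto
    have pos: "positive_op X \<rho>" using X by (simp add: density_def)
    from pos_value_Q[OF X(1) _ Ks pQX pos] X(2)
    have "0 \<le> Re (trace X (mmult X (ext_op W X Q) (ext_so V X E \<rho>)))" by simp
    moreover have "Re (trace X (ext_so V X E \<rho>)) \<le> Re (trace X \<rho>)"
      using TN_X[OF X(1) _ dp[OF E(1)] pos] X(2) by simp
    ultimately show "0 \<le> y" using E(2) by simp
  qed
  show ?thesis
  proof (intro iffI allI impI)
    fix X \<rho> E assume v: "valid_par V \<E> W P Q" and c: "finite X \<and> V \<union> W \<subseteq> X \<and> density X \<rho> \<and> E \<in> \<E>"
    then have "Re (trace X (mmult X (ext_op W X P) \<rho>)) \<le> (INF E\<in>\<E>. Re (trace X (mmult X (ext_op W X Q) (ext_so V X E \<rho>)))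
         + Re (trace X \<rho>) - Re (trace X (ext_so V X E \<rho>)))"
      unfolding valid_par_def by blast
    then show "Re (trace X (mmult X (ext_op W X P) \<rho>)) \<le> Re (trace X (mmult X (ext_op W X Q) (ext_so V X E \<rho>)))
         + Re (trace X \<rho>) - Re (trace X (ext_so V X E \<rho>))"
      using le_cINF_iff[OF ne bdd] c by blast
  next
    assume h: "\<forall>X \<rho> E. finite X \<and> V \<union> W \<subseteq> X \<and> density X \<rho> \<and> E \<in> \<E> \<longrightarrow>
      Re (trace X (mmult X (ext_op W X P) \<rho>)) \<le> Re (trace X (mmult X (ext_op W X Q) (ext_so V X E \<rho>)))
         + Re (trace X \<rho>) - Re (trace X (ext_so V X E \<rho>))"
    show "valid_par V \<E> W P Q" unfolding valid_par_def
    proof (intro allI impI)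
      fix X \<rho> assume c: "finite X \<and> V \<union> W \<subseteq> X \<and> density X \<rho>"
      show "Re (trace X (mmult X (ext_op W X P) \<rho>)) \<le> (INF E\<in>\<E>. Re (trace X (mmult X (ext_op W X Q) (ext_so V X E \<rho>)))
         + Re (trace X \<rho>) - Re (trace X (ext_so V X E \<rho>)))"
        using h c by (intro cINF_greatest[OF ne]) blast
    qed
  qed
qed



lemma projector_idop: "finite X \<Longrightarrow> projector X (idop X)"
  by (simp add: projector_def mmult_idop_left)

lemma supp_ext_so[simp]: "supp_op X (ext_so V X E \<rho>)"
  by (simp add: supp_op_def ext_so_def)

lemma pyth:
  assumes "finite X" "projector X Q" "supp_vec X x"
  shows "Re (inner X x x) = Re (inner X (apply_op X Q x) (apply_op X Q x))
     + Re (inner X (\<lambda>S. x S - apply_op X Q x S) (\<lambda>S. x S - apply_op X Q x S))"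
proof -
  have a: "inner X x (apply_op X Q x) = inner X (apply_op X Q x) (apply_op X Q x)"
    using inner_proj[OF assms(2)] by simp
  have b: "inner X (apply_op X Q x) x = inner X (apply_op X Q x) (apply_op X Q x)"
    using a inner_cnj[of X x "apply_op X Q x"] inner_self_real[of X "apply_op X Q x"]
    by (metis complex_cnj_complex_of_real)
  show ?thesis by (simp add: inner_sub_left inner_sub_right a b)
qed

lemma pure_trace:
  assumes "finite X" "V \<subseteq> X" "kraus_rep V Ks E" "projector X Q"
  shows "trace X (mmult X Q (ext_so V X E (outer X \<psi> \<psi>)))
    = (\<Sum>K\<leftarrow>Ks. inner X (apply_op X Q (apply_op X (ext_op V X K) \<psi>)) (apply_op X Q (apply_op X (ext_op V X K) \<psi>)))"
proof -
  have "trace X (mmult X Q (ext_so V X E (outer X \<psi> \<psi>))) =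
     (\<Sum>K\<leftarrow>Ks. trace X (mmult X Q (mmult X (mmult X (ext_op V X K) (outer X \<psi> \<psi>)) (adj (ext_op V X K)))))"
    by (simp only: ext_so_kraus[OF assms(1,2,3)] mmult_sum_list_right trace_sum_list)
  also have "\<dots> = (\<Sum>K\<leftarrow>Ks. trace X (mmult X (mmult X (mmult X Q (ext_op V X K)) (outer X \<psi> \<psi>)) (adj (mmult X Q (ext_op V X K)))))"
    by (simp only: trace_proj_sandwich[OF assms(4)])
  also have "\<dots> = (\<Sum>K\<leftarrow>Ks. inner X (apply_op X Q (apply_op X (ext_op V X K) \<psi>)) (apply_op X Q (apply_op X (ext_op V X K) \<psi>)))"
    by (simp add: mmult_outer_left mmult_outer_right trace_outer apply_mmult)
  finally show ?thesis .
qed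

lemma pure_trace_id:
  assumes "finite X" "V \<subseteq> X" "kraus_rep V Ks E"
  shows "trace X (ext_so V X E (outer X \<psi> \<psi>))
    = (\<Sum>K\<leftarrow>Ks. inner X (apply_op X (ext_op V X K) \<psi>) (apply_op X (ext_op V X K) \<psi>))"
  using pure_trace[OF assms projector_idop[OF assms(1)], of \<psi>] assms(1)
  by (simp add: mmult_idop_left apply_idop)

lemma extract_par:
  assumes fin: "finite X" and VX: "V \<subseteq> X" and Ks: "kraus_rep V Ks E"
    and pP: "projector X Px" and pQ: "projector X Qx"
    and s\<psi>: "supp_vec X \<psi>" and P\<psi>: "apply_op X Px \<psi> = \<psi>"
    and H: "Re (trace X (mmult X Px (outer X \<psi> \<psi>))) \<le> Re (trace X (mmult X Qx (ext_so V X E (outer X \<psi> \<psi>))))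
       + Re (trace X (outer X \<psi> \<psi>)) - Re (trace X (ext_so V X E (outer X \<psi> \<psi>)))"
  shows "\<And>K. K \<in> set Ks \<Longrightarrow> apply_op X Qx (apply_op X (ext_op V X K) \<psi>) = apply_op X (ext_op V X K) \<psi>"
proof -
  define v where "v = (\<lambda>K. apply_op X (ext_op V X K) \<psi>)"
  define f where "f = (\<lambda>K. Re (inner X (\<lambda>S. v K S - apply_op X Qx (v K) S) (\<lambda>S. v K S - apply_op X Qx (v K) S)))"
  have t1: "Re (trace X (mmult X Px (outer X \<psi> \<psi>))) = Re (trace X (outer X \<psi> \<psi>))"
    by (simp add: trace_mmult_outer trace_outer P\<psi>)
  have "(\<Sum>K\<leftarrow>Ks. Re (inner X (v K) (v K))) - (\<Sum>K\<leftarrow>Ks. Re (inner X (apply_op X Qx (v K)) (apply_op X Qx (v K)))) \<le> 0"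
    using H t1 unfolding pure_trace[OF fin VX Ks pQ] pure_trace_id[OF fin VX Ks] sum_list_Re v_def by simp
  moreover have "Re (inner X (v K) (v K)) - Re (inner X (apply_op X Qx (v K)) (apply_op X Qx (v K))) = f K" for K
    using pyth[OF fin pQ, of "v K"] unfolding f_def by (simp add: v_def)
  ultimately have "(\<Sum>K\<leftarrow>Ks. f K) \<le> 0"
    by (simp only: sum_list_subtractf[symmetric])
  moreover have "\<And>K. f K \<ge> 0" by (simp add: f_def inner_self_Re)
  ultimately have "\<And>K. K \<in> set Ks \<Longrightarrow> f K = 0" using sum_list_nonneg_zero by metis
  then have z: "\<And>K. K \<in> set Ks \<Longrightarrow> (\<lambda>S. v K S - apply_op X Qx (v K) S) = (\<lambda>S. 0)"
    unfolding f_def by (intro inner_self_zero[OF fin]) (auto simp: supp_vec_def v_def apply_op_def)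
  fix K assume "K \<in> set Ks"
  from z[OF this] show "apply_op X Qx (v K) = v K" by (simp add: fun_eq_iff)
qed



lemma apply_scale_vec: "apply_op X A (\<lambda>S. c * u S) = (\<lambda>S. c * apply_op X A u S)"
  by (auto simp: apply_op_def fun_eq_iff sum_distrib_left ac_simps)

lemma inner_scale_both: "inner X (\<lambda>S. c * u S) (\<lambda>S. c * u S) = cnj c * c * inner X u u"
  by (simp add: inner_def sum_distrib_left ac_simps)

lemma supp_scale: "supp_vec X u \<Longrightarrow> supp_vec X (\<lambda>S. c * u S)"
  by (simp add: supp_vec_def)

lemma scale_exists:
  fixes \<psi> :: vec
  obtains r :: real where "r > 0" "Re (inner X (\<lambda>S. complex_of_real r * \<psi> S) (\<lambda>S. complex_of_real r * \<psi> S)) \<le> 1"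
proof -
  define n where "n = Re (inner X \<psi> \<psi>)"
  have n0: "n \<ge> 0" by (simp add: n_def inner_self_Re)
  define r where "r = 1 / (1 + n)"
  have r0: "r > 0" using n0 by (simp add: r_def)
  have "Re (inner X (\<lambda>S. complex_of_real r * \<psi> S) (\<lambda>S. complex_of_real r * \<psi> S)) = r * r * n"
    by (simp add: inner_scale_both n_def)
  also have "\<dots> = n / ((1 + n) * (1 + n))" by (simp add: r_def)
  also have "\<dots> \<le> 1"
  proof -
    have "(1 + n) * (1 + n) = 1 + 2 * n + n * n" by (simp add: algebra_simps)
    moreover have "n * n \<ge> 0" by simp
    ultimately have "n \<le> (1 + n) * (1 + n)" using n0 by linarith
    moreover have "(1 + n) * (1 + n) > 0" using n0 by (simp add: add_pos_nonneg)
    ultimately show ?thesis by (simp add: divide_le_eq_1)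
  qed
  finally show ?thesis using that r0 by blast
qed

lemma extract_par_all:
  assumes fin: "finite X" and VX: "V \<subseteq> X" and Ks: "kraus_rep V Ks E"
    and pP: "projector X Px" and pQ: "projector X Qx"
    and H: "\<And>\<phi>. supp_vec X \<phi> \<Longrightarrow> apply_op X Px \<phi> = \<phi> \<Longrightarrow> Re (inner X \<phi> \<phi>) \<le> 1 \<Longrightarrow>
       Re (trace X (mmult X Px (outer X \<phi> \<phi>))) \<le> Re (trace X (mmult X Qx (ext_so V X E (outer X \<phi> \<phi>))))
       + Re (trace X (outer X \<phi> \<phi>)) - Re (trace X (ext_so V X E (outer X \<phi> \<phi>)))"
    and s\<psi>: "supp_vec X \<psi>" and P\<psi>: "apply_op X Px \<psi> = \<psi>" and K: "K \<in> set Ks"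
  shows "apply_op X Qx (apply_op X (ext_op V X K) \<psi>) = apply_op X (ext_op V X K) \<psi>"
proof -
  obtain r :: real where r: "r > 0" "Re (inner X (\<lambda>S. complex_of_real r * \<psi> S) (\<lambda>S. complex_of_real r * \<psi> S)) \<le> 1"
    using scale_exists by blast
  define \<phi> where "\<phi> = (\<lambda>S. complex_of_real r * \<psi> S)"
  have s\<phi>: "supp_vec X \<phi>" using s\<psi> by (simp add: \<phi>_def supp_scale)
  have P\<phi>: "apply_op X Px \<phi> = \<phi>" using P\<psi> unfolding \<phi>_def apply_scale_vec by simp
  have n\<phi>: "Re (inner X \<phi> \<phi>) \<le> 1" using r(2) unfolding \<phi>_def by blast
  have "apply_op X Qx (apply_op X (ext_op V X K) \<phi>) = apply_op X (ext_op V X K) \<phi>"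
    by (rule extract_par[OF fin VX Ks pP pQ s\<phi> P\<phi> H[OF s\<phi> P\<phi> n\<phi>] K])
  then have "(\<lambda>S. complex_of_real r * apply_op X Qx (apply_op X (ext_op V X K) \<psi>) S) = (\<lambda>S. complex_of_real r * apply_op X (ext_op V X K) \<psi> S)"
    by (simp add: \<phi>_def apply_scale_vec)
  then show ?thesis using r(1) by (simp add: fun_eq_iff)
qed

definition Msum :: "qvar set \<Rightarrow> op list \<Rightarrow> op" where
  "Msum V Ks = (\<lambda>S T. \<Sum>K\<leftarrow>Ks. mmult V (adj K) K S T)"

lemma apply_sum_list: "apply_op X (\<lambda>S T. \<Sum>K\<leftarrow>Ks. f K S T) \<phi> = (\<lambda>S. \<Sum>K\<leftarrow>Ks. apply_op X (f K) \<phi> S)"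
proof (induction Ks)
  case (Cons a Ks)
  have "(\<lambda>S T. \<Sum>K\<leftarrow>a # Ks. f K S T) = (\<lambda>S T. f a S T + (\<lambda>S T. \<Sum>K\<leftarrow>Ks. f K S T) S T)" by simp
  then show ?case using Cons by (simp only: apply_add_op) simp
qed simp

lemma inner_sum_list: "inner X u (\<lambda>S. \<Sum>K\<leftarrow>Ks. f K S) = (\<Sum>K\<leftarrow>Ks. inner X u (f K))"
  by (induction Ks) (simp_all add: inner_def sum.distrib algebra_simps)

lemma inner_Msum: "inner X \<phi> (apply_op X (Msum X Ks) \<phi>) = (\<Sum>K\<leftarrow>Ks. inner X (apply_op X K \<phi>) (apply_op X K \<phi>))"
  unfolding Msum_def apply_sum_list inner_sum_list
  by (simp add: apply_mmult inner_adj)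

lemma ext_so_self:
  assumes "finite V" "kraus_rep V Ks E" shows "ext_so V V E \<rho> = E \<rho>"
proof -
  have s: "\<And>K. K \<in> set Ks \<Longrightarrow> ext_op V V K = K" using assms(2) by (auto simp: kraus_rep_def ext_self)
  have "ext_so V V E \<rho> = (\<lambda>S T. \<Sum>K\<leftarrow>Ks. mmult V (mmult V K \<rho>) (adj K) S T)"
    unfolding ext_so_kraus[OF assms(1) subset_refl assms(2)]
    by (intro ext arg_cong[where f=sum_list] map_cong) (simp_all add: s)
  also have "\<dots> = E \<rho>" using assms(2) by (simp add: kraus_rep_def)
  finally show ?thesis .
qed

lemma trace_E_outer:
  assumes "finite V" "kraus_rep V Ks E"
  shows "trace V (E (outer V \<phi> \<phi>)) = (\<Sum>K\<leftarrow>Ks. inner V (apply_op V K \<phi>) (apply_op V K \<phi>))"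
proof -
  have s: "\<And>K. K \<in> set Ks \<Longrightarrow> ext_op V V K = K" using assms(2) by (auto simp: kraus_rep_def ext_self)
  show ?thesis
    using pure_trace_id[OF assms(1) subset_refl assms(2), of \<phi>] ext_so_self[OF assms] s
    by (simp cong: map_cong)
qed

lemma trace_E_outer_Msum:
  assumes "finite V" "kraus_rep V Ks E"
  shows "trace V (E (outer V \<phi> \<phi>)) = inner V \<phi> (apply_op V (Msum V Ks) \<phi>)"
  by (simp add: trace_E_outer[OF assms] inner_Msum)

lemma sum_list_Im_inner: "Im (\<Sum>K\<leftarrow>Ks. inner X (f K) (f K)) = 0"
  by (induction Ks) (simp_all, metis Im_complex_of_real inner_self_real)

lemma adj_Msum: "adj (Msum V Ks) = Msum V Ks"
proof -
  have "adj (Msum V Ks) = (\<lambda>S T. \<Sum>K\<leftarrow>Ks. adj (mmult V (adj K) K) S T)"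
    by (induction Ks) (simp_all add: adj_def Msum_def fun_eq_iff)
  then show ?thesis by (simp add: adj_mmult Msum_def)
qed

lemma supp_Msum: "supp_op V (Msum V Ks)"
  by (induction Ks) (simp_all add: Msum_def supp_op_def mmult_def)

lemma term_space_char:
  assumes fV: "finite V" and dp: "dprog V E" and Ks: "kraus_rep V Ks E"
  shows "\<phi> \<in> term_space V E \<longleftrightarrow> supp_vec V \<phi> \<and> apply_op V (idop V - Msum V Ks) \<phi> = (\<lambda>S. 0)"
proof -
  define B where "B = idop V - Msum V Ks"
  have sB: "supp_op V B" by (simp add: B_def supp_Msum)
  have aB: "adj B = B" by (simp add: B_def adj_diff adj_Msum)
  have iB: "inner V x (apply_op V B x) = trace V (outer V x x) - trace V (E (outer V x x))" if "supp_vec V x" for x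
    using that fV by (simp add: B_def apply_diff inner_sub_right apply_idop trace_outer trace_E_outer_Msum[OF fV Ks])
  have pos: "Re (inner V x (apply_op V B x)) \<ge> 0" if "supp_vec V x" for x
    using dp positive_outer[of V x] iB[OF that] by (simp add: dprog_def)
  show ?thesis
  proof
    assume "\<phi> \<in> term_space V E"
    then have s: "supp_vec V \<phi>" and "trace V (E (outer V \<phi> \<phi>)) = trace V (outer V \<phi> \<phi>)"
      by (auto simp: term_space_def)
    then have "Re (inner V \<phi> (apply_op V B \<phi>)) = 0" using iB by simp
    then show "supp_vec V \<phi> \<and> apply_op V (idop V - Msum V Ks) \<phi> = (\<lambda>S. 0)"
      using psd_kernel[OF fV sB aB pos s] s by (simp add: B_def)
  next
    assume h: "supp_vec V \<phi> \<and> apply_op V (idop V - Msum V Ks) \<phi> = (\<lambda>S. 0)"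
    then have "inner V \<phi> (apply_op V B \<phi>) = 0" by (simp add: B_def)
    then show "\<phi> \<in> term_space V E" using iB h by (simp add: term_space_def)
  qed
qed



lemma blk_outer:
  assumes "V \<subseteq> X" "a \<subseteq> X - V"
  shows "blk V a a (outer X \<psi> \<psi>) = outer V (vblk V a \<psi>) (vblk V a \<psi>)"
proof (intro ext)
  fix S T
  show "blk V a a (outer X \<psi> \<psi>) S T = outer V (vblk V a \<psi>) (vblk V a \<psi>) S T"
  proof (cases "S \<subseteq> V \<and> T \<subseteq> V")
    case True then have "S \<union> a \<subseteq> X" "T \<union> a \<subseteq> X" using assms by auto
    then show ?thesis using True by (simp add: blk_def outer_def vblk_def)
  qed (auto simp: blk_def outer_def)
qed

lemma supp_vblk: "supp_vec V (vblk V a \<psi>)"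
  by (simp add: supp_vec_def vblk_def)

lemma trace_outer_real: "Im (trace X (outer X \<phi> \<phi>)) = 0"
  by (simp add: trace_outer) (metis Im_complex_of_real inner_self_real)

lemma extract_tot_block:
  assumes fin: "finite X" and VX: "V \<subseteq> X" and dp: "dprog V E" and Ks: "kraus_rep V Ks E"
    and pP: "projector X Px" and pQ: "projector X Qx"
    and H: "\<And>\<rho>. density X \<rho> \<Longrightarrow> Re (trace X (mmult X Px \<rho>)) \<le> Re (trace X (mmult X Qx (ext_so V X E \<rho>)))"
    and s\<psi>: "supp_vec X \<psi>" and P\<psi>: "apply_op X Px \<psi> = \<psi>" and n\<psi>: "Re (inner X \<psi> \<psi>) \<le> 1"
    and a: "a \<subseteq> X - V"
  shows "vblk V a \<psi> \<in> term_space V E"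
proof -
  have fV: "finite V" using fin VX finite_subset by blast
  define \<rho> where "\<rho> = outer X \<psi> \<psi>"
  have d: "density X \<rho>" using n\<psi> by (simp add: \<rho>_def density_outer)
  have "Re (trace X (mmult X Px \<rho>)) = Re (trace X \<rho>)"
    by (simp add: \<rho>_def trace_mmult_outer trace_outer P\<psi>)
  moreover have "Re (trace X (mmult X Qx (ext_so V X E \<rho>))) \<le> Re (trace X (ext_so V X E \<rho>))"
  proof -
    have "\<And>K. Re (inner X (apply_op X Qx (apply_op X (ext_op V X K) \<psi>)) (apply_op X Qx (apply_op X (ext_op V X K) \<psi>)))
          \<le> Re (inner X (apply_op X (ext_op V X K) \<psi>) (apply_op X (ext_op V X K) \<psi>))"
      using pyth[OF fin pQ] inner_self_Re by (smt (verit) supp_apply)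
    then show ?thesis unfolding \<rho>_def pure_trace[OF fin VX Ks pQ] pure_trace_id[OF fin VX Ks] sum_list_Re
      by (intro sum_list_mono_real)
  qed
  ultimately have ge: "Re (trace X \<rho>) \<le> Re (trace X (ext_so V X E \<rho>))" using H[OF d] by simp
  define f where "f = (\<lambda>b. Re (trace V (E (outer V (vblk V b \<psi>) (vblk V b \<psi>)))))"
  define g where "g = (\<lambda>b. Re (trace V (outer V (vblk V b \<psi>) (vblk V b \<psi>))))"
  have sf: "Re (trace X (ext_so V X E \<rho>)) = (\<Sum>b\<in>Pow (X - V). f b)"
    unfolding trace_blocks[OF fin VX] \<rho>_def f_def Re_sum using VX by (intro sum.cong refl) (simp add: blk_outer)
  have sg: "Re (trace X \<rho>) = (\<Sum>b\<in>Pow (X - V). g b)"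
    unfolding \<rho>_def trace_blocks_id[OF fin VX, of "outer X \<psi> \<psi>"] g_def Re_sum using VX by (intro sum.cong refl) (simp add: blk_outer)
  have le: "\<forall>b\<in>Pow (X - V). f b \<le> g b"
    using dp positive_outer by (auto simp: f_def g_def dprog_def)
  have eq: "f a = g a"
  proof (rule ccontr)
    assume "f a \<noteq> g a"
    moreover have "a \<in> Pow (X - V)" using a by simp
    ultimately have "f a < g a" using le by (meson order_le_imp_less_or_eq)
    then have "\<exists>b\<in>Pow (X - V). f b < g b" using \<open>a \<in> Pow (X - V)\<close> by blast
    moreover have "finite (Pow (X - V))" using fin by simp
    ultimately have "(\<Sum>b\<in>Pow (X - V). f b) < (\<Sum>b\<in>Pow (X - V). g b)"
      using le sum_strict_mono_ex1 by blast
    then show False using ge sf sg by simp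
  qed
  have "trace V (E (outer V (vblk V a \<psi>) (vblk V a \<psi>))) = trace V (outer V (vblk V a \<psi>) (vblk V a \<psi>))"
  proof (rule complex_eqI)
    show "Re (trace V (E (outer V (vblk V a \<psi>) (vblk V a \<psi>)))) = Re (trace V (outer V (vblk V a \<psi>) (vblk V a \<psi>)))"
      using eq by (simp add: f_def g_def)
    show "Im (trace V (E (outer V (vblk V a \<psi>) (vblk V a \<psi>)))) = Im (trace V (outer V (vblk V a \<psi>) (vblk V a \<psi>)))"
      by (simp only: trace_E_outer[OF fV Ks] sum_list_Im_inner trace_outer_real)
  qed
  then show ?thesis by (simp add: term_space_def supp_vblk)
qed

lemma vblk_scale: "vblk V a (\<lambda>S. c * \<psi> S) = (\<lambda>s. c * vblk V a \<psi> s)"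
  by (simp add: vblk_def fun_eq_iff)

lemma extract_tot_all:
  assumes fin: "finite X" and VX: "V \<subseteq> X" and dp: "dprog V E" and Ks: "kraus_rep V Ks E"
    and pP: "projector X Px" and pQ: "projector X Qx"
    and H: "\<And>\<rho>. density X \<rho> \<Longrightarrow> Re (trace X (mmult X Px \<rho>)) \<le> Re (trace X (mmult X Qx (ext_so V X E \<rho>)))"
    and s\<psi>: "supp_vec X \<psi>" and P\<psi>: "apply_op X Px \<psi> = \<psi>"
    and a: "a \<subseteq> X - V"
  shows "vblk V a \<psi> \<in> term_space V E"
proof -
  have fV: "finite V" using fin VX finite_subset by blast
  obtain r :: real where r: "r > 0" "Re (inner X (\<lambda>S. complex_of_real r * \<psi> S) (\<lambda>S. complex_of_real r * \<psi> S)) \<le> 1"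
    using scale_exists by blast
  define \<phi> where "\<phi> = (\<lambda>S. complex_of_real r * \<psi> S)"
  have s\<phi>: "supp_vec X \<phi>" using s\<psi> by (simp add: \<phi>_def supp_scale)
  have P\<phi>: "apply_op X Px \<phi> = \<phi>" using P\<psi> unfolding \<phi>_def apply_scale_vec by simp
  have "vblk V a \<phi> \<in> term_space V E"
    by (rule extract_tot_block[OF fin VX dp Ks pP pQ H s\<phi> P\<phi> _ a]) (use r(2) \<phi>_def in simp_all)
  then have "apply_op V (idop V - Msum V Ks) (\<lambda>s. complex_of_real r * vblk V a \<psi> s) = (\<lambda>S. 0)"
    unfolding term_space_char[OF fV dp Ks] \<phi>_def vblk_scale by simp
  then have "apply_op V (idop V - Msum V Ks) (vblk V a \<psi>) = (\<lambda>S. 0)"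
    unfolding apply_scale_vec using r(1) by (simp add: fun_eq_iff)
  then show ?thesis unfolding term_space_char[OF fV dp Ks] by (simp add: supp_vblk)
qed

lemma H_tot_to_par:
  assumes fin: "finite X" and VX: "V \<subseteq> X" and dp: "dprog V E"
    and H: "\<And>\<rho>. density X \<rho> \<Longrightarrow> Re (trace X (mmult X Px \<rho>)) \<le> Re (trace X (mmult X Qx (ext_so V X E \<rho>)))"
  shows "\<And>\<rho>. density X \<rho> \<Longrightarrow> Re (trace X (mmult X Px \<rho>)) \<le> Re (trace X (mmult X Qx (ext_so V X E \<rho>)))
       + Re (trace X \<rho>) - Re (trace X (ext_so V X E \<rho>))"
proof -
  fix \<rho> assume d: "density X \<rho>"
  have "Re (trace X (ext_so V X E \<rho>)) \<le> Re (trace X \<rho>)"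
    using TN_X[OF fin VX dp] d by (simp add: density_def)
  then show "Re (trace X (mmult X Px \<rho>)) \<le> Re (trace X (mmult X Qx (ext_so V X E \<rho>)))
       + Re (trace X \<rho>) - Re (trace X (ext_so V X E \<rho>))" using H[OF d] by simp
qed



lemma minus_zero_op[simp]: "A - (\<lambda>S T. 0) = (A :: op)"
  by (simp add: fun_eq_iff)

lemma trace_idop_minus: "finite X \<Longrightarrow> supp_op X M \<Longrightarrow> trace X (mmult X (idop X - Q) M) = trace X M - trace X (mmult X Q M)"
  by (simp add: mmult_diff_left mmult_idop_left trace_diff)

lemma sandwich_shift:
  "mmult X (mmult X (mmult X A P) \<rho>) (adj (mmult X A P)) = mmult X (mmult X A (mmult X (mmult X P \<rho>) (adj P))) (adj A)"
  by (simp add: adj_mmult mmult_assoc)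

lemma establish_chain:
  assumes fin: "finite X" and VX: "V \<subseteq> X" and Ls: "kraus_rep V Ls F"
    and pP: "projector X Px" and pQ: "projector X Qx"
    and C: "\<And>L. L \<in> set Ls \<Longrightarrow> mmult X (mmult X (idop X - Qx) (ext_op V X L)) Px = (\<lambda>S T. 0)"
    and pos: "positive_op X \<rho>"
  shows "Re (trace X (mmult X (idop X - Qx) (ext_so V X F \<rho>)))
      \<le> Re (trace X (ext_so V X F (mmult X (mmult X (idop X - Px) \<rho>) (adj (idop X - Px)))))"
proof -
  define Qc where "Qc = idop X - Qx"
  define Pc where "Pc = idop X - Px"
  define \<sigma> where "\<sigma> = mmult X (mmult X Pc \<rho>) (adj Pc)"
  have pQc: "projector X Qc" using projector_compl[OF fin pQ] by (simp add: Qc_def)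
  have ps: "positive_op X \<sigma>" using pos_sandwich[OF pos] by (simp add: \<sigma>_def)
  have each: "Re (trace X (mmult X Qc (mmult X (mmult X (ext_op V X L) \<rho>) (adj (ext_op V X L)))))
      \<le> Re (trace X (mmult X (mmult X (ext_op V X L) \<sigma>) (adj (ext_op V X L))))" if L: "L \<in> set Ls" for L
  proof -
    define A where "A = ext_op V X L"
    have e1: "mmult X (mmult X Qc A) Pc = mmult X Qc A"
      using C[OF L] fin by (simp add: Pc_def Qc_def A_def mmult_diff_right mmult_idop_right)
    have "trace X (mmult X Qc (mmult X (mmult X A \<rho>) (adj A)))
        = trace X (mmult X (mmult X (mmult X Qc A) \<rho>) (adj (mmult X Qc A)))"
      by (rule trace_proj_sandwich[OF pQc])
    also have "\<dots> = trace X (mmult X (mmult X (mmult X (mmult X Qc A) Pc) \<rho>) (adj (mmult X (mmult X Qc A) Pc)))"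
      by (simp only: e1)
    also have "\<dots> = trace X (mmult X (mmult X (mmult X Qc A) \<sigma>) (adj (mmult X Qc A)))"
      by (simp only: sandwich_shift \<sigma>_def)
    also have "\<dots> = trace X (mmult X Qc (mmult X (mmult X A \<sigma>) (adj A)))"
      by (rule trace_proj_sandwich[OF pQc, symmetric])
    also have "\<dots> = trace X (mmult X (mmult X A \<sigma>) (adj A)) - trace X (mmult X Qx (mmult X (mmult X A \<sigma>) (adj A)))"
      unfolding Qc_def by (rule trace_idop_minus[OF fin]) simp
    finally have eq: "trace X (mmult X Qc (mmult X (mmult X A \<rho>) (adj A))) =
        trace X (mmult X (mmult X A \<sigma>) (adj A)) - trace X (mmult X Qx (mmult X (mmult X A \<sigma>) (adj A)))" .
    have "Re (trace X (mmult X Qx (mmult X (mmult X A \<sigma>) (adj A)))) \<ge> 0"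
      unfolding trace_proj_sandwich[OF pQ] by (rule pos_sandwich_trace[OF ps])
    then show ?thesis using eq by (simp add: A_def)
  qed
  have "Re (trace X (mmult X Qc (ext_so V X F \<rho>))) =
      (\<Sum>L\<leftarrow>Ls. Re (trace X (mmult X Qc (mmult X (mmult X (ext_op V X L) \<rho>) (adj (ext_op V X L))))))"
    by (simp only: ext_so_kraus[OF fin VX Ls] mmult_sum_list_right trace_sum_list sum_list_Re)
  also have "\<dots> \<le> (\<Sum>L\<leftarrow>Ls. Re (trace X (mmult X (mmult X (ext_op V X L) \<sigma>) (adj (ext_op V X L)))))"
    by (rule sum_list_mono_real) (rule each)
  also have "\<dots> = Re (trace X (ext_so V X F \<sigma>))"
    by (simp only: ext_so_kraus[OF fin VX Ls] trace_sum_list sum_list_Re)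
  finally show ?thesis by (simp add: Qc_def \<sigma>_def Pc_def)
qed

lemma trace_sandwich_proj:
  assumes "projector X P" shows "trace X (mmult X (mmult X P \<rho>) (adj P)) = trace X (mmult X P \<rho>)"
proof -
  have "trace X (mmult X (mmult X P \<rho>) (adj P)) = trace X (mmult X (adj P) (mmult X P \<rho>))"
    by (rule trace_comm)
  also have "\<dots> = trace X (mmult X (mmult X P P) \<rho>)"
    by (simp only: projector_adj[OF assms] mmult_assoc)
  finally show ?thesis by (simp only: projector_idem[OF assms])
qed

lemma establish_par:
  assumes fin: "finite X" and VX: "V \<subseteq> X" and dp: "dprog V F" and Ls: "kraus_rep V Ls F"
    and pP: "projector X Px" and pQ: "projector X Qx"
    and C: "\<And>L. L \<in> set Ls \<Longrightarrow> mmult X (mmult X (idop X - Qx) (ext_op V X L)) Px = (\<lambda>S T. 0)"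
    and d: "density X \<rho>"
  shows "Re (trace X (mmult X Px \<rho>)) \<le> Re (trace X (mmult X Qx (ext_so V X F \<rho>)))
       + Re (trace X \<rho>) - Re (trace X (ext_so V X F \<rho>))"
proof -
  have pos: "positive_op X \<rho>" using d by (simp add: density_def)
  have sr: "supp_op X \<rho>" using pos by (simp add: positive_op_def)
  define \<sigma> where "\<sigma> = mmult X (mmult X (idop X - Px) \<rho>) (adj (idop X - Px))"
  have ch: "Re (trace X (mmult X (idop X - Qx) (ext_so V X F \<rho>))) \<le> Re (trace X (ext_so V X F \<sigma>))"
    using establish_chain[OF fin VX Ls pP pQ C pos] by (simp add: \<sigma>_def)
  have "Re (trace X (ext_so V X F \<sigma>)) \<le> Re (trace X \<sigma>)"
    using TN_X[OF fin VX dp pos_sandwich[OF pos]] by (simp add: \<sigma>_def)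
  also have "trace X \<sigma> = trace X \<rho> - trace X (mmult X Px \<rho>)"
    unfolding \<sigma>_def trace_sandwich_proj[OF projector_compl[OF fin pP]]
    by (rule trace_idop_minus[OF fin sr])
  finally have "Re (trace X (mmult X (idop X - Qx) (ext_so V X F \<rho>))) \<le> Re (trace X \<rho>) - Re (trace X (mmult X Px \<rho>))"
    using ch by simp
  moreover have "trace X (mmult X (idop X - Qx) (ext_so V X F \<rho>)) = trace X (ext_so V X F \<rho>) - trace X (mmult X Qx (ext_so V X F \<rho>))"
    by (rule trace_idop_minus[OF fin]) simp
  ultimately show ?thesis by simp
qed

lemma ext_add: "ext_op V X (\<lambda>S T. A S T + B S T) = (\<lambda>S T. ext_op V X A S T + ext_op V X B S T)"
  by (auto simp: ext_op_def fun_eq_iff algebra_simps)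

lemma ext_sum_list: "ext_op V X (\<lambda>S T. \<Sum>K\<leftarrow>Ks. f K S T) = (\<lambda>S T. \<Sum>K\<leftarrow>Ks. ext_op V X (f K) S T)"
proof (induction Ks)
  case (Cons a Ks)
  have "(\<lambda>S T. \<Sum>K\<leftarrow>a # Ks. f K S T) = (\<lambda>S T. f a S T + (\<lambda>S T. \<Sum>K\<leftarrow>Ks. f K S T) S T)" by simp
  then show ?case using Cons by (simp only: ext_add) simp
qed simp

lemma mmult_sum_list_left: "mmult X (\<lambda>S T. \<Sum>K\<leftarrow>Ks. f K S T) Q = (\<lambda>S T. \<Sum>K\<leftarrow>Ks. mmult X (f K) Q S T)"
proof (induction Ks)
  case (Cons a Ks)
  have "(\<lambda>S T. \<Sum>K\<leftarrow>a # Ks. f K S T) = (\<lambda>S T. f a S T + (\<lambda>S T. \<Sum>K\<leftarrow>Ks. f K S T) S T)" by simp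
  then show ?case using Cons by (simp only: mmult_add_left) simp
qed simp

lemma trace_sand_cyc: "trace X (mmult X (mmult X A \<tau>) (adj A)) = trace X (mmult X (mmult X (adj A) A) \<tau>)"
proof -
  have "trace X (mmult X (mmult X A \<tau>) (adj A)) = trace X (mmult X (adj A) (mmult X A \<tau>))"
    by (rule trace_comm)
  then show ?thesis by (simp only: mmult_assoc)
qed

lemma trace_ext_so_M:
  assumes fin: "finite X" and VX: "V \<subseteq> X" and Ls: "kraus_rep V Ls F"
  shows "trace X (ext_so V X F \<tau>) = trace X (mmult X (ext_op V X (Msum V Ls)) \<tau>)"
proof -
  have "trace X (ext_so V X F \<tau>) = (\<Sum>L\<leftarrow>Ls. trace X (mmult X (mmult X (ext_op V X L) \<tau>) (adj (ext_op V X L))))"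
    by (simp only: ext_so_kraus[OF fin VX Ls] trace_sum_list)
  also have "\<dots> = (\<Sum>L\<leftarrow>Ls. trace X (mmult X (mmult X (adj (ext_op V X L)) (ext_op V X L)) \<tau>))"
    by (simp only: trace_sand_cyc)
  also have "\<dots> = trace X (mmult X (ext_op V X (Msum V Ls)) \<tau>)"
    by (simp only: Msum_def ext_sum_list ext_mult[OF fin VX, symmetric] ext_adj[symmetric]
        mmult_sum_list_left trace_sum_list)
  finally show ?thesis .
qed

lemma establish_tot:
  assumes fin: "finite X" and VX: "V \<subseteq> X" and dp: "dprog V F" and Ls: "kraus_rep V Ls F"
    and pP: "projector X Px" and pQ: "projector X Qx"
    and C: "\<And>L. L \<in> set Ls \<Longrightarrow> mmult X (mmult X (idop X - Qx) (ext_op V X L)) Px = (\<lambda>S T. 0)"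
    and MP: "mmult X (ext_op V X (Msum V Ls)) Px = Px"
    and d: "density X \<rho>"
  shows "Re (trace X (mmult X Px \<rho>)) \<le> Re (trace X (mmult X Qx (ext_so V X F \<rho>)))"
proof -
  have pos: "positive_op X \<rho>" using d by (simp add: density_def)
  define Pc where "Pc = idop X - Px"
  define M where "M = ext_op V X (Msum V Ls)"
  define \<sigma> where "\<sigma> = mmult X (mmult X Pc \<rho>) (adj Pc)"
  have ch: "Re (trace X (mmult X (idop X - Qx) (ext_so V X F \<rho>))) \<le> Re (trace X (ext_so V X F \<sigma>))"
    using establish_chain[OF fin VX Ls pP pQ C pos] by (simp add: \<sigma>_def Pc_def)
  have sM: "supp_op X M" by (simp add: M_def)
  have sP: "supp_op X Px" using pP by (simp add: projector_def)
  have aM: "adj M = M" by (simp add: M_def ext_adj adj_Msum)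
  have aP: "adj Px = Px" using pP by (simp add: projector_def)
  have MP': "mmult X M Px = Px" using MP by (simp add: M_def)
  have PM: "mmult X Px M = Px"
  proof -
    have "mmult X Px M = adj (mmult X (adj M) (adj Px))" by (simp add: adj_mmult)
    also have "\<dots> = Px" by (simp add: aM aP MP')
    finally show ?thesis .
  qed
  have PMP: "mmult X (mmult X Pc M) Pc = M - Px"
  proof -
    have "mmult X Pc M = M - Px" unfolding Pc_def by (simp add: mmult_diff_left mmult_idop_left[OF fin sM] PM)
    then have "mmult X (mmult X Pc M) Pc = mmult X (M - Px) (idop X - Px)" by (simp add: Pc_def)
    also have "\<dots> = (M - Px) - (mmult X M Px - mmult X Px Px)"
      using fin sM sP by (simp add: mmult_diff_right mmult_diff_left mmult_idop_right)
    also have "\<dots> = M - Px" by (simp add: MP' projector_idem[OF pP] fun_eq_iff)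
    finally show ?thesis .
  qed
  have aPc: "adj Pc = Pc" by (simp add: Pc_def adj_diff aP)
  have "trace X (mmult X M \<sigma>) = trace X (mmult X (mmult X M (mmult X Pc \<rho>)) Pc)"
    by (simp only: \<sigma>_def aPc mmult_assoc)
  also have "\<dots> = trace X (mmult X Pc (mmult X M (mmult X Pc \<rho>)))"
    by (rule trace_comm)
  also have "\<dots> = trace X (mmult X (mmult X (mmult X Pc M) Pc) \<rho>)"
    by (simp only: mmult_assoc)
  also have "\<dots> = trace X (mmult X M \<rho>) - trace X (mmult X Px \<rho>)"
    by (simp only: PMP mmult_diff_left trace_diff)
  finally have "trace X (ext_so V X F \<sigma>) = trace X (ext_so V X F \<rho>) - trace X (mmult X Px \<rho>)"
    by (simp only: trace_ext_so_M[OF fin VX Ls] M_def)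
  moreover have "trace X (mmult X (idop X - Qx) (ext_so V X F \<rho>)) = trace X (ext_so V X F \<rho>) - trace X (mmult X Qx (ext_so V X F \<rho>))"
    by (rule trace_idop_minus[OF fin]) simp
  ultimately show ?thesis using ch by simp
qed



definition lin_closed :: "op set \<Rightarrow> bool" where
  "lin_closed Z \<longleftrightarrow> (\<forall>F c. finite F \<and> F \<subseteq> Z \<longrightarrow> (\<lambda>S T. \<Sum>K\<in>F. c K * K S T) \<in> Z)"

lemma cspan_sub: "lin_closed Z \<Longrightarrow> A \<subseteq> Z \<Longrightarrow> cspan A \<subseteq> Z"
  unfolding lin_closed_def cspan_def by blast

lemma join_span_sub:
  assumes "lin_closed Z" "\<And>G Ks. G \<in> \<G> \<Longrightarrow> kraus_rep V Ks G \<Longrightarrow> set Ks \<subseteq> Z"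
  shows "join_span V \<G> \<subseteq> Z"
  unfolding join_span_def kspan_def
proof (rule cspan_sub[OF assms(1)], rule subsetI)
  fix x assume "x \<in> (\<Union>G\<in>\<G>. cspan (\<Union> {set Ks |Ks. kraus_rep V Ks G}))"
  then obtain G where G: "G \<in> \<G>" "x \<in> cspan (\<Union> {set Ks |Ks. kraus_rep V Ks G})" by blast
  have "\<Union> {set Ks |Ks. kraus_rep V Ks G} \<subseteq> Z" using assms(2)[OF G(1)] by blast
  then show "x \<in> Z" using cspan_sub[OF assms(1)] G(2) by blast
qed

lemma in_cspan: "x \<in> A \<Longrightarrow> x \<in> cspan A"
  unfolding cspan_def by (rule CollectI, rule exI[of _ "{x}"], rule exI[of _ "\<lambda>_. 1"]) simp

lemma kraus_in_join: "G \<in> \<G> \<Longrightarrow> kraus_rep V Ks G \<Longrightarrow> K \<in> set Ks \<Longrightarrow> K \<in> join_span V \<G>"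
  unfolding join_span_def kspan_def by (rule in_cspan) (blast intro: in_cspan)

lemma supp_comb: assumes "\<And>K. K \<in> F \<Longrightarrow> supp_op V K" shows "supp_op V (\<lambda>S T. \<Sum>K\<in>F. c K * K S T)"
  unfolding supp_op_def
proof (intro allI impI)
  fix S T assume a: "\<not> (S \<subseteq> V \<and> T \<subseteq> V)"
  have "c K * K S T = 0" if "K \<in> F" for K
    using assms[OF that] a unfolding supp_op_def by simp
  then show "(\<Sum>K\<in>F. c K * K S T) = 0" by (simp add: sum.neutral)
qed

lemma lin_closed_supp: "lin_closed {K. supp_op V K}"
  unfolding lin_closed_def using supp_comb by blast

lemma join_span_supp: "join_span V \<G> \<subseteq> {K. supp_op V K}"
  by (rule join_span_sub[OF lin_closed_supp]) (auto simp: kraus_rep_def)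

lemma mmult_comb_right: "mmult X A (\<lambda>S T. \<Sum>K\<in>F. c K * B K S T) = (\<lambda>S T. \<Sum>K\<in>F. c K * mmult X A (B K) S T)"
proof (intro ext)
  fix S T show "mmult X A (\<lambda>S T. \<Sum>K\<in>F. c K * B K S T) S T = (\<Sum>K\<in>F. c K * mmult X A (B K) S T)"
  proof (cases "S \<subseteq> X \<and> T \<subseteq> X")
    case True
    then show ?thesis unfolding mmult_def
      by (simp add: sum_distrib_left ac_simps) (rule sum.swap)
  next
    case False
    then have c: "(S \<subseteq> X \<and> T \<subseteq> X) = False" by simp
    show ?thesis by (simp only: mmult_def c if_False mult_zero_right sum.neutral_const)
  qed
qed

lemma mmult_comb_left: "mmult X (\<lambda>S T. \<Sum>K\<in>F. c K * B K S T) A = (\<lambda>S T. \<Sum>K\<in>F. c K * mmult X (B K) A S T)"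
proof (intro ext)
  fix S T show "mmult X (\<lambda>S T. \<Sum>K\<in>F. c K * B K S T) A S T = (\<Sum>K\<in>F. c K * mmult X (B K) A S T)"
  proof (cases "S \<subseteq> X \<and> T \<subseteq> X")
    case True
    then show ?thesis unfolding mmult_def
      by (simp add: sum_distrib_left sum_distrib_right ac_simps) (rule sum.swap)
  next
    case False
    then have c: "(S \<subseteq> X \<and> T \<subseteq> X) = False" by simp
    show ?thesis by (simp only: mmult_def c if_False mult_zero_right sum.neutral_const)
  qed
qed

lemma apply_comb: "apply_op X (\<lambda>S T. \<Sum>K\<in>F. c K * B K S T) \<phi> = (\<lambda>S. \<Sum>K\<in>F. c K * apply_op X (B K) \<phi> S)"
proof (intro ext)
  fix S show "apply_op X (\<lambda>S T. \<Sum>K\<in>F. c K * B K S T) \<phi> S = (\<Sum>K\<in>F. c K * apply_op X (B K) \<phi> S)"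
  proof (cases "S \<subseteq> X")
    case True
    then show ?thesis unfolding apply_op_def
      by (simp add: sum_distrib_left sum_distrib_right ac_simps) (rule sum.swap)
  qed (simp add: apply_op_def)
qed

definition Zset :: "qvar set \<Rightarrow> qvar set \<Rightarrow> op \<Rightarrow> op \<Rightarrow> op set" where
  "Zset V X Qx Px = {K. supp_op V K \<and> mmult X (mmult X (idop X - Qx) (ext_op V X K)) Px = (\<lambda>S T. 0)}"

lemma lin_closed_Zset: "lin_closed (Zset V X Qx Px)"
  unfolding lin_closed_def
proof (intro allI impI)
  fix F c assume h: "finite F \<and> F \<subseteq> Zset V X Qx Px"
  have "mmult X (mmult X (idop X - Qx) (ext_op V X (\<lambda>S T. \<Sum>K\<in>F. c K * K S T))) Px
      = (\<lambda>S T. \<Sum>K\<in>F. c K * mmult X (mmult X (idop X - Qx) (ext_op V X K)) Px S T)"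
    by (simp only: ext_lin mmult_comb_right mmult_comb_left)
  also have "\<dots> = (\<lambda>S T. 0)" using h by (auto simp: Zset_def fun_eq_iff intro!: sum.neutral)
  finally show "(\<lambda>S T. \<Sum>K\<in>F. c K * K S T) \<in> Zset V X Qx Px"
    using h supp_comb[of F V c] by (auto simp: Zset_def)
qed

lemma C_from_vec:
  assumes fin: "finite X" and pP: "projector X Px" and pQ: "projector X Qx" and sA: "supp_op X A"
    and h: "\<And>\<psi>. supp_vec X \<psi> \<Longrightarrow> apply_op X Px \<psi> = \<psi> \<Longrightarrow> apply_op X Qx (apply_op X A \<psi>) = apply_op X A \<psi>"
  shows "mmult X (mmult X (idop X - Qx) A) Px = (\<lambda>S T. 0)"
proof (rule op_eq_ket[OF fin])
  fix S assume "S \<subseteq> X"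
  define \<psi> where "\<psi> = apply_op X Px (ket S)"
  have "apply_op X Px \<psi> = \<psi>" by (simp add: \<psi>_def projector_apply2[OF pP])
  then have e: "apply_op X Qx (apply_op X A \<psi>) = apply_op X A \<psi>" using h by (simp add: \<psi>_def)
  have "apply_op X (mmult X (mmult X (idop X - Qx) A) Px) (ket S) = apply_op X (idop X - Qx) (apply_op X A \<psi>)"
    by (simp add: apply_mmult \<psi>_def)
  also have "\<dots> = (\<lambda>R. 0)" using fin by (simp add: apply_diff apply_idop e)
  finally show "apply_op X (mmult X (mmult X (idop X - Qx) A) Px) (ket S) = apply_op X (\<lambda>S T. 0) (ket S)" by simp
qed (simp, simp add: supp_op_def)

lemma subsp_sum:
  assumes "subsp X U" "finite F" "\<And>K. K \<in> F \<Longrightarrow> g K \<in> U"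
  shows "(\<lambda>S. \<Sum>K\<in>F. c K * g K S) \<in> U"
  using assms(2,3)
proof (induction F rule: finite_induct)
  case empty then show ?case using assms(1) by (simp add: subsp_def)
next
  case (insert x F)
  have "(\<lambda>S. c x * g x S + 1 * (\<lambda>S. \<Sum>K\<in>F. c K * g K S) S) \<in> U"
    using insert by (intro subsp_comb[OF assms(1)]) auto
  then show ?case using insert by simp
qed



definition NN :: "qvar set \<Rightarrow> nat" where "NN V = Suc (Max (insert 0 V))"
definition shf :: "qvar set \<Rightarrow> qvar set \<Rightarrow> qvar set" where "shf V T = (\<lambda>n. n + NN V) ` T"
definition WW :: "qvar set \<Rightarrow> qvar set" where "WW V = V \<union> shf V V"
definition Phi :: "qvar set \<Rightarrow> vec" where
  "Phi V = (\<lambda>R. if R \<subseteq> WW V \<and> R \<inter> shf V V = shf V (R \<inter> V) then 1 else 0)"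
definition vecK :: "qvar set \<Rightarrow> op \<Rightarrow> vec" where
  "vecK V K = apply_op (WW V) (ext_op V (WW V) K) (Phi V)"

lemma NN_gt: "finite V \<Longrightarrow> v \<in> V \<Longrightarrow> v < NN V"
  unfolding NN_def by (simp add: le_imp_less_Suc)

lemma disj_shf: "finite V \<Longrightarrow> V \<inter> shf V T = {}"
  unfolding shf_def using NN_gt by fastforce

lemma finite_WW: "finite V \<Longrightarrow> finite (WW V)"
  by (simp add: WW_def shf_def)

lemma V_WW: "V \<subseteq> WW V" by (simp add: WW_def)

lemma shf_inj: "shf V S = shf V T \<Longrightarrow> S = T"
  unfolding shf_def by (metis add_right_imp_eq inj_image_eq_iff inj_on_def)

lemma shf_mono: "T \<subseteq> V \<Longrightarrow> shf V T \<subseteq> shf V V"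
  unfolding shf_def by blast

lemma supp_Phi: "supp_vec (WW V) (Phi V)"
  by (simp add: supp_vec_def Phi_def)

lemma vblk_Phi_shf:
  assumes fV: "finite V" and T: "T \<subseteq> V"
  shows "vblk V (shf V T) (Phi V) = ket T"
proof (intro ext)
  fix u show "vblk V (shf V T) (Phi V) u = ket T u"
  proof (cases "u \<subseteq> V")
    case True
    have d: "V \<inter> shf V V = {}" using disj_shf[OF fV] .
    have s: "shf V T \<subseteq> shf V V" using shf_mono[OF T] .
    have a: "(u \<union> shf V T) \<inter> shf V V = shf V T" using True d s by blast
    have b: "(u \<union> shf V T) \<inter> V = u" using True d s by blast
    have c: "u \<union> shf V T \<subseteq> WW V" using True s by (auto simp: WW_def)
    have "vblk V (shf V T) (Phi V) u = Phi V (u \<union> shf V T)" using True by (simp add: vblk_def)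
    also have "\<dots> = (if shf V T = shf V u then 1 else 0)" unfolding Phi_def using a b c by presburger
    also have "\<dots> = ket T u" unfolding ket_def using shf_inj by metis
    finally show ?thesis .
  next
    case False
    then have "u \<noteq> T" using T by blast
    then show ?thesis using False by (simp add: vblk_def ket_def)
  qed
qed

lemma vecK_at:
  assumes fV: "finite V" and S: "S \<subseteq> V" and T: "T \<subseteq> V"
  shows "vecK V K (S \<union> shf V T) = K S T"
proof -
  have d: "V \<inter> shf V V = {}" using disj_shf[OF fV] .
  have s: "shf V T \<subseteq> shf V V" using shf_mono[OF T] .
  have R: "S \<union> shf V T \<subseteq> WW V" using S s by (auto simp: WW_def)
  have a: "(S \<union> shf V T) - V = shf V T" using d s S by auto
  have b: "(S \<union> shf V T) \<inter> V = S" using S d s by auto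
  have "vecK V K (S \<union> shf V T) = apply_op V K (vblk V ((S \<union> shf V T) - V) (Phi V)) ((S \<union> shf V T) \<inter> V)"
    unfolding vecK_def ext_apply[OF finite_WW[OF fV] V_WW] using R by (simp only: if_True)
  also have "\<dots> = apply_op V K (ket T) S" by (simp only: a b vblk_Phi_shf[OF fV T])
  also have "\<dots> = K S T" using S by (simp only: apply_ket[OF T fV] if_True)
  finally show ?thesis .
qed

lemma supp_vecK: "supp_vec (WW V) (vecK V K)"
  by (simp add: vecK_def)

lemma vecK_inj:
  assumes fV: "finite V" and s1: "supp_op V K1" and s2: "supp_op V K2" and e: "vecK V K1 = vecK V K2"
  shows "K1 = K2"
proof (intro ext)
  fix S T show "K1 S T = K2 S T"
  proof (cases "S \<subseteq> V \<and> T \<subseteq> V")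
    case True
    then show ?thesis using vecK_at[OF fV, of S T K1] vecK_at[OF fV, of S T K2] e by simp
  qed (use s1 s2 in \<open>auto simp: supp_op_def\<close>)
qed

lemma vecK_comb: "vecK V (\<lambda>S T. \<Sum>K\<in>F. c K * K S T) = (\<lambda>R. \<Sum>K\<in>F. c K * vecK V K R)"
  by (simp only: vecK_def ext_lin apply_comb)

lemma vecK_mult:
  assumes "finite V"
  shows "vecK V (mmult V K Tp) = apply_op (WW V) (ext_op V (WW V) K) (vecK V Tp)"
  by (simp add: vecK_def ext_mult[OF finite_WW[OF assms] V_WW, symmetric] apply_mmult)

lemma span1_proj:
  assumes fW: "finite W" and sv: "supp_vec W v"
  shows "\<exists>P. projector W P \<and> op_range W P = {(\<lambda>R. c * v R) | c. True}"
proof -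
  have "subsp W {(\<lambda>R. c * v R) | c. True}"
    unfolding subsp_def
  proof (intro conjI ballI allI)
    show "(\<lambda>_. 0) \<in> {(\<lambda>R. c * v R) | c. True}" by (rule CollectI, rule exI[of _ 0]) simp
    fix u assume "u \<in> {(\<lambda>R. c * v R) | c. True}"
    then show "supp_vec W u" using sv by (auto simp: supp_vec_def)
  next
    fix u w a b assume "u \<in> {(\<lambda>R. c * v R) | c. True}" "w \<in> {(\<lambda>R. c * v R) | c. True}"
    then obtain c1 c2 where "u = (\<lambda>R. c1 * v R)" "w = (\<lambda>R. c2 * v R)" by blast
    then show "(\<lambda>S. a * u S + b * w S) \<in> {(\<lambda>R. c * v R) | c. True}"
      by (intro CollectI exI[of _ "a * c1 + b * c2"]) (simp add: algebra_simps)
  qed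
  then show ?thesis using proj_exists[OF fW] by blast
qed

lemma line_kill:
  assumes fW: "finite W" and pP: "projector W P" and r: "op_range W P = {(\<lambda>R. c * v R) | c. True}"
    and sA: "supp_op W A" and Av: "apply_op W A v = (\<lambda>R. 0)"
  shows "mmult W A P = (\<lambda>S T. 0)"
proof (rule op_eq_ket[OF fW])
  fix S assume S: "S \<subseteq> W"
  have "apply_op W P (ket S) \<in> op_range W P" using S by (auto simp: op_range_def supp_ket)
  then obtain c where c: "apply_op W P (ket S) = (\<lambda>R. c * v R)" using r by auto
  show "apply_op W (mmult W A P) (ket S) = apply_op W (\<lambda>S T. 0) (ket S)"
    by (simp add: apply_mmult c apply_scale_vec Av)
qed (simp, simp add: supp_op_def)

lemma line_fix:
  assumes fW: "finite W" and pP: "projector W P" and r: "op_range W P = {(\<lambda>R. c * v R) | c. True}"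
    and Av: "apply_op W A v = v"
  shows "mmult W A P = P"
proof (rule op_eq_ket[OF fW])
  fix S assume S: "S \<subseteq> W"
  have "apply_op W P (ket S) \<in> op_range W P" using S by (auto simp: op_range_def supp_ket)
  then obtain c where c: "apply_op W P (ket S) = (\<lambda>R. c * v R)" using r by auto
  show "apply_op W (mmult W A P) (ket S) = apply_op W P (ket S)"
    by (simp add: apply_mmult c apply_scale_vec Av)
qed (simp, use pP in \<open>simp add: projector_def\<close>)

lemma line_elem:
  assumes pP: "projector W P" and r: "op_range W P = {(\<lambda>R. c * v R) | c. True}"
    and s\<phi>: "supp_vec W \<phi>" and P\<phi>: "apply_op W P \<phi> = \<phi>"
  shows "\<exists>c. \<phi> = (\<lambda>R. c * v R)"
proof -
  have "\<phi> \<in> op_range W P" using op_range_char[OF pP] s\<phi> P\<phi> by auto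
  then show ?thesis using r by auto
qed

lemma line_in: "projector W P \<Longrightarrow> op_range W P = {(\<lambda>R. c * v R) | c. True} \<Longrightarrow> apply_op W P v = v"
proof -
  assume pP: "projector W P" and r: "op_range W P = {(\<lambda>R. c * v R) | c. True}"
  have "v \<in> op_range W P" unfolding r by (rule CollectI, rule exI[of _ 1]) simp
  then show "apply_op W P v = v" using op_range_char[OF pP] by auto
qed

lemma lift_zero:
  assumes fX: "finite X" and VW: "V \<subseteq> W" and WX: "W \<subseteq> X"
    and h: "mmult W (mmult W (idop W - R) (ext_op V W K)) P = (\<lambda>S T. 0)"
  shows "mmult X (mmult X (idop X - ext_op W X R) (ext_op V X K)) (ext_op W X P) = (\<lambda>S T. 0)"
proof -
  have "idop X - ext_op W X R = ext_op W X (idop W - R)" by (simp add: ext_diff ext_idop)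
  moreover have "ext_op V X K = ext_op W X (ext_op V W K)" using ext_ext[OF VW WX] by simp
  ultimately have "mmult X (mmult X (idop X - ext_op W X R) (ext_op V X K)) (ext_op W X P)
      = ext_op W X (mmult W (mmult W (idop W - R) (ext_op V W K)) P)"
    by (simp add: ext_mult[OF fX WX])
  then show ?thesis using h by simp
qed

lemma lift_fix:
  assumes fX: "finite X" and VW: "V \<subseteq> W" and WX: "W \<subseteq> X"
    and h: "mmult W (ext_op V W M) P = P"
  shows "mmult X (ext_op V X M) (ext_op W X P) = ext_op W X P"
proof -
  have "ext_op V X M = ext_op W X (ext_op V W M)" using ext_ext[OF VW WX] by simp
  then show ?thesis using h by (simp add: ext_mult[OF fX WX])
qed



lemma nprog_ne: "nprog V \<E> \<Longrightarrow> \<E> \<noteq> {}" by (simp add: nprog_def)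
lemma nprog_dprog: "nprog V \<E> \<Longrightarrow> E \<in> \<E> \<Longrightarrow> dprog V E" by (auto simp: nprog_def)

lemma sum_restrict_sub:
  assumes "finite B" "A \<subseteq> B"
  shows "(\<Sum>K\<in>B. if K \<in> A then g K else 0) = (\<Sum>K\<in>A. g K)"
proof -
  have "(\<Sum>K\<in>B. if K \<in> A then g K else 0) = (\<Sum>K\<in>A. if K \<in> A then g K else 0)"
    using assms by (intro sum.mono_neutral_right) auto
  also have "\<dots> = (\<Sum>K\<in>A. g K)" by (rule sum.cong) auto
  finally show ?thesis .
qed

lemma cspan_comb2:
  assumes "x \<in> cspan A" "y \<in> cspan A"
  shows "(\<lambda>S T. a * x S T + b * y S T) \<in> cspan A"
proof -
  obtain F1 c1 where 1: "finite F1" "F1 \<subseteq> A" "x = (\<lambda>S T. \<Sum>K\<in>F1. c1 K * K S T)" using assms(1) by (auto simp: cspan_def)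
  obtain F2 c2 where 2: "finite F2" "F2 \<subseteq> A" "y = (\<lambda>S T. \<Sum>K\<in>F2. c2 K * K S T)" using assms(2) by (auto simp: cspan_def)
  define c where "c = (\<lambda>K. a * (if K \<in> F1 then c1 K else 0) + b * (if K \<in> F2 then c2 K else 0))"
  have eq: "(\<lambda>S T. a * x S T + b * y S T) = (\<lambda>S T. \<Sum>K\<in>F1 \<union> F2. c K * K S T)"
  proof (intro ext)
    fix S T
    have e: "c K * K S T = a * (if K \<in> F1 then c1 K * K S T else 0) + b * (if K \<in> F2 then c2 K * K S T else 0)" for K
      by (simp add: c_def algebra_simps)
    have "(\<Sum>K\<in>F1 \<union> F2. c K * K S T) = a * (\<Sum>K\<in>F1 \<union> F2. if K \<in> F1 then c1 K * K S T else 0)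
        + b * (\<Sum>K\<in>F1 \<union> F2. if K \<in> F2 then c2 K * K S T else 0)"
      by (simp only: e sum.distrib sum_distrib_left)
    also have "\<dots> = a * x S T + b * y S T"
      using 1 2 by (simp add: sum_restrict_sub)
    finally show "a * x S T + b * y S T = (\<Sum>K\<in>F1 \<union> F2. c K * K S T)" by simp
  qed
  have "finite (F1 \<union> F2) \<and> F1 \<union> F2 \<subseteq> A \<and> (\<lambda>S T. a * x S T + b * y S T) = (\<lambda>S T. \<Sum>K\<in>F1 \<union> F2. c K * K S T)"
    using 1 2 eq by simp
  then show ?thesis unfolding cspan_def by (intro CollectI exI)
qed

lemma zero_in_cspan: "(\<lambda>S T. 0) \<in> cspan A"
  unfolding cspan_def by (rule CollectI, rule exI[of _ "{}"]) simp

lemma ext_scale: "ext_op V X (\<lambda>S T. c * A S T) = (\<lambda>S T. c * ext_op V X A S T)"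
  by (auto simp: ext_op_def fun_eq_iff)

lemma vecK_lin2: "vecK V (\<lambda>S T. a * x S T + b * y S T) = (\<lambda>R. a * vecK V x R + b * vecK V y R)"
  unfolding vecK_def by (simp only: ext_add ext_scale apply_add_op apply_scale_op)

lemma vecK_zero: "vecK V (\<lambda>S T. 0) = (\<lambda>R. 0)"
  by (simp add: vecK_def)

lemma U_subsp: "subsp (WW V) (vecK V ` join_span V \<G>)"
  unfolding subsp_def
proof (intro conjI ballI allI)
  have "(\<lambda>S T. 0) \<in> join_span V \<G>" unfolding join_span_def by (rule zero_in_cspan)
  then have "vecK V (\<lambda>S T. 0) \<in> vecK V ` join_span V \<G>" by (rule imageI)
  then show "(\<lambda>_. 0) \<in> vecK V ` join_span V \<G>" by (simp only: vecK_zero)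
  fix u assume "u \<in> vecK V ` join_span V \<G>" then show "supp_vec (WW V) u" by (auto simp: supp_vecK)
next
  fix u w a b assume "u \<in> vecK V ` join_span V \<G>" "w \<in> vecK V ` join_span V \<G>"
  then obtain x y where xy: "x \<in> join_span V \<G>" "y \<in> join_span V \<G>" "u = vecK V x" "w = vecK V y" by blast
  have "(\<lambda>S T. a * x S T + b * y S T) \<in> join_span V \<G>"
    using xy(1,2) unfolding join_span_def by (rule cspan_comb2)
  then have "vecK V (\<lambda>S T. a * x S T + b * y S T) \<in> vecK V ` join_span V \<G>" by (rule imageI)
  then show "(\<lambda>S. a * u S + b * w S) \<in> vecK V ` join_span V \<G>" by (simp only: vecK_lin2 xy(3,4))
qed

lemma back_in:
  assumes fV: "finite V" and s: "supp_op V L0" and h: "vecK V L0 \<in> vecK V ` join_span V \<G>"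
  shows "L0 \<in> join_span V \<G>"
proof -
  obtain K where K: "K \<in> join_span V \<G>" "vecK V L0 = vecK V K" using h by blast
  have "supp_op V K" using K(1) join_span_supp by blast
  then have "L0 = K" using vecK_inj[OF fV s _ K(2)] by simp
  then show ?thesis using K(1) by simp
qed

lemma lin_closed_Zvec:
  assumes "subsp (WW V) U"
  shows "lin_closed {K. supp_op V K \<and> vecK V K \<in> U}"
  unfolding lin_closed_def
proof (intro allI impI)
  fix F c assume h: "finite F \<and> F \<subseteq> {K. supp_op V K \<and> vecK V K \<in> U}"
  have "vecK V (\<lambda>S T. \<Sum>K\<in>F. c K * K S T) \<in> U"
    unfolding vecK_comb using h by (intro subsp_sum[OF assms]) auto
  then show "(\<lambda>S T. \<Sum>K\<in>F. c K * K S T) \<in> {K. supp_op V K \<and> vecK V K \<in> U}"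
    using h supp_comb[of F V c] by auto
qed

lemma valid_par_iff_n:
  assumes "finite V" "nprog V \<E>" "finite W" "projector W Q"
  shows "valid_par V \<E> W P Q \<longleftrightarrow> (\<forall>X \<rho> E. finite X \<and> V \<union> W \<subseteq> X \<and> density X \<rho> \<and> E \<in> \<E> \<longrightarrow>
      Re (trace X (mmult X (ext_op W X P) \<rho>)) \<le> Re (trace X (mmult X (ext_op W X Q) (ext_so V X E \<rho>)))
         + Re (trace X \<rho>) - Re (trace X (ext_so V X E \<rho>)))"
  by (rule valid_par_iff) (use assms in \<open>auto simp: nprog_def\<close>)

lemma valid_tot_iff_n:
  assumes "finite V" "nprog V \<E>" "finite W" "projector W Q"
  shows "valid_tot V \<E> W P Q \<longleftrightarrow> (\<forall>X \<rho> E. finite X \<and> V \<union> W \<subseteq> X \<and> density X \<rho> \<and> E \<in> \<E> \<longrightarrow>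
      Re (trace X (mmult X (ext_op W X P) \<rho>)) \<le> Re (trace X (mmult X (ext_op W X Q) (ext_so V X E \<rho>))))"
  by (rule valid_tot_iff) (use assms in \<open>auto simp: nprog_def\<close>)

lemma kraus_supp: "kraus_rep V Ks E \<Longrightarrow> K \<in> set Ks \<Longrightarrow> supp_op V K"
  by (simp add: kraus_rep_def)

lemma kraus_in_Zset_par:
  assumes fX: "finite X" and VX: "V \<subseteq> X" and Ks: "kraus_rep V Ks E"
    and pP: "projector X Px" and pQ: "projector X Qx"
    and H: "\<And>\<rho>. density X \<rho> \<Longrightarrow> Re (trace X (mmult X Px \<rho>)) \<le> Re (trace X (mmult X Qx (ext_so V X E \<rho>)))
       + Re (trace X \<rho>) - Re (trace X (ext_so V X E \<rho>))"
  shows "set Ks \<subseteq> Zset V X Qx Px"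
proof
  fix K assume K: "K \<in> set Ks"
  have "mmult X (mmult X (idop X - Qx) (ext_op V X K)) Px = (\<lambda>S T. 0)"
  proof (rule C_from_vec[OF fX pP pQ supp_ext])
    fix \<psi> assume s\<psi>: "supp_vec X \<psi>" and P\<psi>: "apply_op X Px \<psi> = \<psi>"
    show "apply_op X Qx (apply_op X (ext_op V X K) \<psi>) = apply_op X (ext_op V X K) \<psi>"
    proof (rule extract_par_all[OF fX VX Ks pP pQ _ s\<psi> P\<psi> K])
      fix \<phi> assume "Re (inner X \<phi> \<phi>) \<le> 1"
      then show "Re (trace X (mmult X Px (outer X \<phi> \<phi>))) \<le> Re (trace X (mmult X Qx (ext_so V X E (outer X \<phi> \<phi>))))
       + Re (trace X (outer X \<phi> \<phi>)) - Re (trace X (ext_so V X E (outer X \<phi> \<phi>)))"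
        by (rule H[OF density_outer])
    qed
  qed
  then show "K \<in> Zset V X Qx Px" using kraus_supp[OF Ks K] by (simp add: Zset_def)
qed

lemma part1_if:
  assumes fV: "finite V" and nE: "nprog V \<E>" and nF: "nprog V \<F>"
    and sub: "join_span V \<F> \<subseteq> join_span V \<E>"
  shows "le_P V \<E> \<F>"
  unfolding le_P_def
proof (intro allI impI)
  fix W P Q assume WPQ: "finite W \<and> projector W P \<and> projector W Q" and vE: "valid_par V \<E> W P Q"
  have fW: "finite W" and pQW: "projector W Q" using WPQ by auto
  have vE': "\<forall>X \<rho> E. finite X \<and> V \<union> W \<subseteq> X \<and> density X \<rho> \<and> E \<in> \<E> \<longrightarrow>
      Re (trace X (mmult X (ext_op W X P) \<rho>)) \<le> Re (trace X (mmult X (ext_op W X Q) (ext_so V X E \<rho>)))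
         + Re (trace X \<rho>) - Re (trace X (ext_so V X E \<rho>))"
    by (rule iffD1[OF valid_par_iff_n[OF fV nE fW pQW] vE])
  show "valid_par V \<F> W P Q"
    unfolding valid_par_iff_n[OF fV nF fW pQW]
  proof (intro allI impI)
    fix X \<rho> F assume c: "finite X \<and> V \<union> W \<subseteq> X \<and> density X \<rho> \<and> F \<in> \<F>"
    have fX: "finite X" and VX: "V \<subseteq> X" and WX: "W \<subseteq> X" and d: "density X \<rho>" and F: "F \<in> \<F>" using c by auto
    have pP: "projector X (ext_op W X P)" using projector_ext[OF fX WX] WPQ by blast
    have pQ: "projector X (ext_op W X Q)" using projector_ext[OF fX WX] WPQ by blast
    have "join_span V \<E> \<subseteq> Zset V X (ext_op W X Q) (ext_op W X P)"
    proof (rule join_span_sub[OF lin_closed_Zset])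
      fix E Ks assume E: "E \<in> \<E>" and Ks: "kraus_rep V Ks E"
      show "set Ks \<subseteq> Zset V X (ext_op W X Q) (ext_op W X P)"
      proof (rule kraus_in_Zset_par[OF fX VX Ks pP pQ])
        fix \<rho>' assume "density X \<rho>'"
        then show "Re (trace X (mmult X (ext_op W X P) \<rho>')) \<le> Re (trace X (mmult X (ext_op W X Q) (ext_so V X E \<rho>')))
         + Re (trace X \<rho>') - Re (trace X (ext_so V X E \<rho>'))"
          using vE'[rule_format, of X \<rho>' E] c E by simp
      qed
    qed
    with sub have Z: "join_span V \<F> \<subseteq> Zset V X (ext_op W X Q) (ext_op W X P)" by blast
    have dF: "dprog V F" using nprog_dprog[OF nF F] .
    then obtain Ls where Ls: "kraus_rep V Ls F" by (auto simp: dprog_def)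
    show "Re (trace X (mmult X (ext_op W X P) \<rho>)) \<le> Re (trace X (mmult X (ext_op W X Q) (ext_so V X F \<rho>)))
         + Re (trace X \<rho>) - Re (trace X (ext_so V X F \<rho>))"
    proof (rule establish_par[OF fX VX dF Ls pP pQ _ d])
      fix L assume "L \<in> set Ls"
      then have "L \<in> Zset V X (ext_op W X Q) (ext_op W X P)" using Z kraus_in_join[OF F Ls] by blast
      then show "mmult X (mmult X (idop X - ext_op W X Q) (ext_op V X L)) (ext_op W X P) = (\<lambda>S T. 0)"
        by (simp add: Zset_def)
    qed
  qed
qed



lemma apply_compl: "finite X \<Longrightarrow> supp_vec X y \<Longrightarrow> apply_op X (idop X - R) y = (\<lambda>S. y S - apply_op X R y S)"
  by (simp add: apply_diff apply_idop)

lemma ext_vecK: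
  assumes fV: "finite V" and sK: "supp_op V K"
  shows "apply_op (WW V) (ext_op V (WW V) K) (vecK V (idop V)) = vecK V K"
  using vecK_mult[OF fV, of K "idop V"] mmult_idop_right[OF fV sK] by simp

lemma range_fix: "projector X R \<Longrightarrow> y \<in> op_range X R \<Longrightarrow> apply_op X R y = y"
  using op_range_char by blast

lemma part1_only_if:
  assumes fV: "finite V" and nE: "nprog V \<E>" and nF: "nprog V \<F>" and le: "le_P V \<E> \<F>"
  shows "join_span V \<F> \<subseteq> join_span V \<E>"
proof -
  define W where "W = WW V"
  have fW: "finite W" using finite_WW[OF fV] by (simp add: W_def)
  have VW: "V \<subseteq> W" by (simp add: W_def V_WW)
  define U where "U = vecK V ` join_span V \<E>"
  have sU: "subsp W U" unfolding U_def W_def by (rule U_subsp)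
  obtain R where pR: "projector W R" and rR: "op_range W R = U" using proj_exists[OF fW sU] by blast
  define v where "v = vecK V (idop V)"
  have sv: "supp_vec W v" by (simp add: v_def W_def supp_vecK)
  obtain P where pP: "projector W P" and rP: "op_range W P = {(\<lambda>R. c * v R) | c. True}"
    using span1_proj[OF fW sv] by blast
  have Kv: "apply_op W (ext_op V W K) v = vecK V K" if "supp_op V K" for K
    unfolding v_def W_def by (rule ext_vecK[OF fV that])
  have vE: "valid_par V \<E> W P R"
    unfolding valid_par_iff_n[OF fV nE fW pR]
  proof (intro allI impI)
    fix X \<rho> E assume c: "finite X \<and> V \<union> W \<subseteq> X \<and> density X \<rho> \<and> E \<in> \<E>"
    have fX: "finite X" and WX: "W \<subseteq> X" and VX: "V \<subseteq> X" and d: "density X \<rho>" and E: "E \<in> \<E>" using c by auto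
    have dE: "dprog V E" using nprog_dprog[OF nE E] .
    then obtain Ks where Ks: "kraus_rep V Ks E" by (auto simp: dprog_def)
    show "Re (trace X (mmult X (ext_op W X P) \<rho>)) \<le> Re (trace X (mmult X (ext_op W X R) (ext_so V X E \<rho>)))
         + Re (trace X \<rho>) - Re (trace X (ext_so V X E \<rho>))"
    proof (rule establish_par[OF fX VX dE Ks projector_ext[OF fX WX pP] projector_ext[OF fX WX pR] _ d])
      fix K assume K: "K \<in> set Ks"
      have sK: "supp_op V K" using kraus_supp[OF Ks K] .
      have inU: "vecK V K \<in> U" unfolding U_def using kraus_in_join[OF E Ks K] by (rule imageI)
      have "mmult W (mmult W (idop W - R) (ext_op V W K)) P = (\<lambda>S T. 0)"
      proof (rule line_kill[OF fW pP rP])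
        show "supp_op W (mmult W (idop W - R) (ext_op V W K))" by simp
        have RK: "apply_op W R (vecK V K) = vecK V K" using range_fix[OF pR] inU rR by simp
        have svK: "supp_vec W (vecK V K)" by (simp add: W_def supp_vecK)
        show "apply_op W (mmult W (idop W - R) (ext_op V W K)) v = (\<lambda>R. 0)"
          using fW svK RK by (simp add: apply_mmult Kv[OF sK] apply_compl)
      qed
      then show "mmult X (mmult X (idop X - ext_op W X R) (ext_op V X K)) (ext_op W X P) = (\<lambda>S T. 0)"
        by (rule lift_zero[OF fX VW WX])
    qed
  qed
  have vF: "valid_par V \<F> W P R" using le vE fW pP pR unfolding le_P_def by blast
  have vF': "\<forall>X \<rho> E. finite X \<and> V \<union> W \<subseteq> X \<and> density X \<rho> \<and> E \<in> \<F> \<longrightarrow>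
      Re (trace X (mmult X (ext_op W X P) \<rho>)) \<le> Re (trace X (mmult X (ext_op W X R) (ext_so V X E \<rho>)))
         + Re (trace X \<rho>) - Re (trace X (ext_so V X E \<rho>))"
    by (rule iffD1[OF valid_par_iff_n[OF fV nF fW pR] vF])
  have ePP: "ext_op W W P = P" using pP by (simp add: ext_self projector_def)
  have eRR: "ext_op W W R = R" using pR by (simp add: ext_self projector_def)
  have "join_span V \<F> \<subseteq> {K. supp_op V K \<and> vecK V K \<in> U}"
  proof (rule join_span_sub[OF lin_closed_Zvec])
    show "subsp (WW V) U" using sU by (simp add: W_def)
    fix F Ls assume F: "F \<in> \<F>" and Ls: "kraus_rep V Ls F"
    show "set Ls \<subseteq> {K. supp_op V K \<and> vecK V K \<in> U}"
    proof
      fix L assume L: "L \<in> set Ls"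
      have sL: "supp_op V L" using kraus_supp[OF Ls L] .
      have "apply_op W R (apply_op W (ext_op V W L) v) = apply_op W (ext_op V W L) v"
      proof (rule extract_par_all[OF fW VW Ls pP pR _ sv line_in[OF pP rP] L])
        fix \<phi> assume "Re (inner W \<phi> \<phi>) \<le> 1"
        then have "density W (outer W \<phi> \<phi>)" by (rule density_outer)
        then show "Re (trace W (mmult W P (outer W \<phi> \<phi>))) \<le> Re (trace W (mmult W R (ext_so V W F (outer W \<phi> \<phi>))))
          + Re (trace W (outer W \<phi> \<phi>)) - Re (trace W (ext_so V W F (outer W \<phi> \<phi>)))"
          using vF'[rule_format, of W "outer W \<phi> \<phi>" F] fW VW F by (simp add: ePP eRR)
      qed
      then have RL: "apply_op W R (vecK V L) = vecK V L" by (simp only: Kv[OF sL])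
      have svL: "supp_vec W (vecK V L)" by (simp add: W_def supp_vecK)
      have "vecK V L \<in> op_range W R"
        using op_range_char[OF pR] RL svL by simp
      then show "L \<in> {K. supp_op V K \<and> vecK V K \<in> U}" using sL rR by simp
    qed
  qed
  then show ?thesis using back_in[OF fV] unfolding U_def by blast
qed



lemma term_set_subsp:
  assumes fV: "finite V" and nE: "nprog V \<E>"
  shows "subsp V (term_space_set V \<E>)"
  unfolding subsp_def
proof (intro conjI ballI allI)
  show "(\<lambda>_. 0) \<in> term_space_set V \<E>"
  proof -
    have "(\<lambda>_. 0) \<in> term_space V E" if "E \<in> \<E>" for E
    proof -
      have dE: "dprog V E" using nprog_dprog[OF nE that] .
      then obtain Ks where Ks: "kraus_rep V Ks E" by (auto simp: dprog_def)
      show ?thesis unfolding term_space_char[OF fV dE Ks] by (simp add: supp_vec_def)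
    qed
    then show ?thesis by (simp add: term_space_set_def supp_vec_def)
  qed
  fix u assume "u \<in> term_space_set V \<E>" then show "supp_vec V u" by (simp add: term_space_set_def)
next
  fix u w a b assume u: "u \<in> term_space_set V \<E>" and w: "w \<in> term_space_set V \<E>"
  have "(\<lambda>S. a * u S + b * w S) \<in> term_space V E" if E: "E \<in> \<E>" for E
  proof -
    have dE: "dprog V E" using nprog_dprog[OF nE E] .
    then obtain Ks where Ks: "kraus_rep V Ks E" by (auto simp: dprog_def)
    have "u \<in> term_space V E" "w \<in> term_space V E" using u w E by (auto simp: term_space_set_def)
    then show ?thesis unfolding term_space_char[OF fV dE Ks]
      by (simp add: apply_lin supp_vec_def)
  qed
  moreover have "supp_vec V (\<lambda>S. a * u S + b * w S)" using u w by (simp add: term_space_set_def supp_vec_def)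
  ultimately show "(\<lambda>S. a * u S + b * w S) \<in> term_space_set V \<E>" by (simp add: term_space_set_def)
qed

lemma Tp_props:
  assumes fV: "finite V" and nE: "nprog V \<E>"
  shows "projector V (proj_of V (term_space_set V \<E>)) \<and> op_range V (proj_of V (term_space_set V \<E>)) = term_space_set V \<E>"
  by (rule proj_of_props[OF fV term_set_subsp[OF fV nE]])

lemma kraus_comp:
  assumes pT: "projector V Tp" and Ks: "kraus_rep V Ks E"
  shows "kraus_rep V (map (\<lambda>K. mmult V K Tp) Ks) (E \<circ> proj_so V Tp)"
proof -
  have E: "E = (\<lambda>\<rho> S T. \<Sum>K\<leftarrow>Ks. mmult V (mmult V K \<rho>) (adj K) S T)" using Ks by (simp add: kraus_rep_def)
  have aT: "adj Tp = Tp" using pT by (simp add: projector_def)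
  show ?thesis unfolding kraus_rep_def
    by (auto simp: E proj_so_def fun_eq_iff adj_mmult aT mmult_assoc comp_def)
qed

lemma ext_so_comp_fixed:
  assumes fX: "finite X" and VX: "V \<subseteq> X" and pT: "projector V Tp" and Ks: "kraus_rep V Ks E"
    and fx: "apply_op X (ext_op V X Tp) \<phi> = \<phi>"
  shows "ext_so V X (E \<circ> proj_so V Tp) (outer X \<phi> \<phi>) = ext_so V X E (outer X \<phi> \<phi>)"
proof -
  have aT: "adj Tp = Tp" using pT by (simp add: projector_def)
  have e: "mmult X (mmult X (ext_op V X (mmult V K Tp)) (outer X \<phi> \<phi>)) (adj (ext_op V X (mmult V K Tp)))
      = mmult X (mmult X (ext_op V X K) (outer X \<phi> \<phi>)) (adj (ext_op V X K))" for K
  proof -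
    have "mmult X (mmult X (ext_op V X (mmult V K Tp)) (outer X \<phi> \<phi>)) (adj (ext_op V X (mmult V K Tp)))
       = mmult X (mmult X (ext_op V X K) (mmult X (mmult X (ext_op V X Tp) (outer X \<phi> \<phi>)) (adj (ext_op V X Tp)))) (adj (ext_op V X K))"
      by (simp add: ext_mult[OF fX VX, symmetric] adj_mmult mmult_assoc)
    also have "mmult X (mmult X (ext_op V X Tp) (outer X \<phi> \<phi>)) (adj (ext_op V X Tp)) = outer X \<phi> \<phi>"
      by (simp add: mmult_outer_left mmult_outer_right fx)
    finally show ?thesis .
  qed
  show ?thesis
    unfolding ext_so_kraus[OF fX VX kraus_comp[OF pT Ks]] ext_so_kraus[OF fX VX Ks]
    by (simp add: e comp_def)
qed

lemma E_zero: "kraus_rep V Ks E \<Longrightarrow> E (\<lambda>S T. 0) = (\<lambda>S T. 0)"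
  by (induction Ks arbitrary: E) (auto simp: kraus_rep_def fun_eq_iff)

lemma kraus_comp_absorb:
  assumes fV: "finite V" and pT: "projector V Tp" and Ks: "kraus_rep V Ks E"
    and Gs: "kraus_rep V Gs (E \<circ> proj_so V Tp)" and G: "G \<in> set Gs"
  shows "mmult V G Tp = G"
proof (rule op_eq_ket[OF fV])
  show "supp_op V (mmult V G Tp)" by simp
  show "supp_op V G" using kraus_supp[OF Gs G] .
  fix S assume S: "S \<subseteq> V"
  define x where "x = apply_op V (idop V - Tp) (ket S)"
  have sx: "supp_vec V x" by (simp add: x_def)
  have aT: "adj Tp = Tp" using pT by (simp add: projector_def)
  have sT: "supp_op V Tp" using pT by (simp add: projector_def)
  have xe: "x = (\<lambda>U. ket S U - apply_op V Tp (ket S) U)" unfolding x_def using fV supp_ket[OF S]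
    by (simp add: apply_diff apply_idop)
  have Tx: "apply_op V Tp x = (\<lambda>S. 0)"
    unfolding xe apply_sub projector_apply2[OF pT] by simp
  have "(E \<circ> proj_so V Tp) (outer V x x) = (\<lambda>S T. 0)"
  proof -
    have "proj_so V Tp (outer V x x) = (\<lambda>S T. 0)"
      unfolding proj_so_def using mmult_outer_right[of V "apply_op V Tp x" x Tp] aT
      by (simp add: mmult_outer_left Tx)
    then show ?thesis using E_zero[OF Ks] by simp
  qed
  then have "(\<Sum>K\<leftarrow>Gs. inner V (apply_op V K x) (apply_op V K x)) = 0"
    using trace_E_outer[OF fV Gs, of x] by (simp add: trace_def)
  then have "(\<Sum>K\<leftarrow>Gs. Re (inner V (apply_op V K x) (apply_op V K x))) \<le> 0"
    by (metis order_refl sum_list_Re zero_complex.simps(1))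
  then have "Re (inner V (apply_op V G x) (apply_op V G x)) = 0"
    using sum_list_nonneg_zero[of Gs "\<lambda>K. Re (inner V (apply_op V K x) (apply_op V K x))"] inner_self_Re G by blast
  then have Gx: "apply_op V G x = (\<lambda>S. 0)" using inner_self_zero[OF fV supp_apply] by blast
  have "apply_op V G (ket S) = apply_op V G (apply_op V Tp (ket S))"
  proof -
    from xe have "apply_op V G x = (\<lambda>U. apply_op V G (ket S) U - apply_op V G (apply_op V Tp (ket S)) U)"
      by (simp add: apply_sub)
    then show ?thesis using Gx by (simp add: fun_eq_iff)
  qed
  then show "apply_op V (mmult V G Tp) (ket S) = apply_op V G (ket S)" by (simp add: apply_mmult)
qed

lemma fixed_by_blocks:
  assumes fX: "finite X" and VX: "V \<subseteq> X" and s\<psi>: "supp_vec X \<psi>"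
    and h: "\<And>a. a \<subseteq> X - V \<Longrightarrow> apply_op V Tp (vblk V a \<psi>) = vblk V a \<psi>"
  shows "apply_op X (ext_op V X Tp) \<psi> = \<psi>"
  by (rule vec_eq_blocks[OF VX supp_apply s\<psi>]) (simp add: vblk_ext_apply[OF fX VX] h)

lemma Msum_fix:
  assumes fV: "finite V" and dF: "dprog V F" and Ls: "kraus_rep V Ls F" and pT: "projector V Tp"
    and sub: "op_range V Tp \<subseteq> term_space V F"
  shows "mmult V (Msum V Ls) Tp = Tp"
proof (rule op_eq_ket[OF fV])
  show "supp_op V (mmult V (Msum V Ls) Tp)" by simp
  show "supp_op V Tp" using pT by (simp add: projector_def)
  fix S assume S: "S \<subseteq> V"
  define y where "y = apply_op V Tp (ket S)"
  have "y \<in> op_range V Tp" using S by (auto simp: y_def op_range_def supp_ket)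
  then have "y \<in> term_space V F" using sub by blast
  then have "apply_op V (idop V - Msum V Ls) y = (\<lambda>S. 0)" using term_space_char[OF fV dF Ls] by blast
  then have "apply_op V (Msum V Ls) y = y"
    using fV by (simp add: apply_diff apply_idop y_def fun_eq_iff)
  then show "apply_op V (mmult V (Msum V Ls) Tp) (ket S) = apply_op V Tp (ket S)"
    by (simp add: apply_mmult y_def)
qed



lemma part2_if:
  assumes fV: "finite V" and nE: "nprog V \<E>" and nF: "nprog V \<F>"
    and sub1: "term_space_set V \<E> \<subseteq> term_space_set V \<F>"
    and sub2: "join_span V ((\<lambda>F. F \<circ> proj_so V (proj_of V (term_space_set V \<E>))) ` \<F>)
           \<subseteq> join_span V ((\<lambda>E. E \<circ> proj_so V (proj_of V (term_space_set V \<E>))) ` \<E>)"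
  shows "le_T V \<E> \<F>"
  unfolding le_T_def
proof (intro allI impI)
  define Tp where "Tp = proj_of V (term_space_set V \<E>)"
  have pT: "projector V Tp" and rT: "op_range V Tp = term_space_set V \<E>"
    using Tp_props[OF fV nE] by (auto simp: Tp_def)
  have sT: "supp_op V Tp" using pT by (simp add: projector_def)
  fix W P Q assume WPQ: "finite W \<and> projector W P \<and> projector W Q" and vE: "valid_tot V \<E> W P Q"
  have fW: "finite W" and pPW: "projector W P" and pQW: "projector W Q" using WPQ by auto
  have vE': "\<forall>X \<rho> E. finite X \<and> V \<union> W \<subseteq> X \<and> density X \<rho> \<and> E \<in> \<E> \<longrightarrow>
      Re (trace X (mmult X (ext_op W X P) \<rho>)) \<le> Re (trace X (mmult X (ext_op W X Q) (ext_so V X E \<rho>)))"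
    by (rule iffD1[OF valid_tot_iff_n[OF fV nE fW pQW] vE])
  show "valid_tot V \<F> W P Q"
    unfolding valid_tot_iff_n[OF fV nF fW pQW]
  proof (intro allI impI)
    fix X \<rho> F assume c: "finite X \<and> V \<union> W \<subseteq> X \<and> density X \<rho> \<and> F \<in> \<F>"
    have fX: "finite X" and VX: "V \<subseteq> X" and WX: "W \<subseteq> X" and d: "density X \<rho>" and F: "F \<in> \<F>" using c by auto
    define Px where "Px = ext_op W X P"
    define Qx where "Qx = ext_op W X Q"
    define Tx where "Tx = ext_op V X Tp"
    have pP: "projector X Px" using projector_ext[OF fX WX pPW] by (simp add: Px_def)
    have pQ: "projector X Qx" using projector_ext[OF fX WX pQW] by (simp add: Qx_def)
    have HE: "Re (trace X (mmult X Px \<rho>')) \<le> Re (trace X (mmult X Qx (ext_so V X E \<rho>')))"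
      if "E \<in> \<E>" "density X \<rho>'" for E \<rho>'
      using vE'[rule_format, of X \<rho>' E] c that by (simp add: Px_def Qx_def)
    have stepA: "apply_op X Tx \<psi> = \<psi>" if s\<psi>: "supp_vec X \<psi>" and P\<psi>: "apply_op X Px \<psi> = \<psi>" for \<psi>
      unfolding Tx_def
    proof (rule fixed_by_blocks[OF fX VX s\<psi>])
      fix a assume a: "a \<subseteq> X - V"
      have "vblk V a \<psi> \<in> term_space V E" if E: "E \<in> \<E>" for E
      proof -
        have dE: "dprog V E" using nprog_dprog[OF nE E] .
        then obtain Ks where Ks: "kraus_rep V Ks E" by (auto simp: dprog_def)
        show ?thesis by (rule extract_tot_all[OF fX VX dE Ks pP pQ HE[OF E] s\<psi> P\<psi> a])
      qed
      then have "vblk V a \<psi> \<in> term_space_set V \<E>" by (simp add: term_space_set_def supp_vblk)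
      then show "apply_op V Tp (vblk V a \<psi>) = vblk V a \<psi>" using range_fix[OF pT] rT by simp
    qed
    have stepB: "mmult X Tx Px = Px"
    proof (rule op_eq_ket[OF fX])
      show "supp_op X (mmult X Tx Px)" by simp
      show "supp_op X Px" using pP by (simp add: projector_def)
      fix S assume S: "S \<subseteq> X"
      have "apply_op X Px (apply_op X Px (ket S)) = apply_op X Px (ket S)" by (rule projector_apply2[OF pP])
      then show "apply_op X (mmult X Tx Px) (ket S) = apply_op X Px (ket S)"
        using stepA[OF supp_apply] by (simp add: apply_mmult)
    qed
    have "join_span V ((\<lambda>E. E \<circ> proj_so V Tp) ` \<E>) \<subseteq> Zset V X Qx Px"
    proof (rule join_span_sub[OF lin_closed_Zset])
      fix G Gs assume G: "G \<in> (\<lambda>E. E \<circ> proj_so V Tp) ` \<E>" and Gs: "kraus_rep V Gs G"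
      from G obtain E where E: "E \<in> \<E>" and GE: "G = E \<circ> proj_so V Tp" by (rule imageE) (rule that, simp_all)
      have dE: "dprog V E" using nprog_dprog[OF nE E] .
      then obtain Ks where Ks: "kraus_rep V Ks E" by (auto simp: dprog_def)
      show "set Gs \<subseteq> Zset V X Qx Px"
      proof
        fix g assume g: "g \<in> set Gs"
        have "mmult X (mmult X (idop X - Qx) (ext_op V X g)) Px = (\<lambda>S T. 0)"
        proof (rule C_from_vec[OF fX pP pQ supp_ext])
          fix \<psi> assume s\<psi>: "supp_vec X \<psi>" and P\<psi>: "apply_op X Px \<psi> = \<psi>"
          show "apply_op X Qx (apply_op X (ext_op V X g) \<psi>) = apply_op X (ext_op V X g) \<psi>"
          proof (rule extract_par_all[OF fX VX Gs pP pQ _ s\<psi> P\<psi> g])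
            fix \<phi> assume s\<phi>: "supp_vec X \<phi>" and P\<phi>: "apply_op X Px \<phi> = \<phi>" and n\<phi>: "Re (inner X \<phi> \<phi>) \<le> 1"
            have eq: "ext_so V X G (outer X \<phi> \<phi>) = ext_so V X E (outer X \<phi> \<phi>)"
              unfolding GE by (rule ext_so_comp_fixed[OF fX VX pT Ks]) (use stepA[OF s\<phi> P\<phi>] in \<open>simp add: Tx_def\<close>)
            have "Re (trace X (mmult X Px (outer X \<phi> \<phi>))) \<le> Re (trace X (mmult X Qx (ext_so V X E (outer X \<phi> \<phi>))))
                + Re (trace X (outer X \<phi> \<phi>)) - Re (trace X (ext_so V X E (outer X \<phi> \<phi>)))"
              by (rule H_tot_to_par[OF fX VX dE HE[OF E] density_outer[OF n\<phi>]])
            then show "Re (trace X (mmult X Px (outer X \<phi> \<phi>))) \<le> Re (trace X (mmult X Qx (ext_so V X G (outer X \<phi> \<phi>))))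
                + Re (trace X (outer X \<phi> \<phi>)) - Re (trace X (ext_so V X G (outer X \<phi> \<phi>)))"
              by (simp only: eq)
          qed
        qed
        then show "g \<in> Zset V X Qx Px" using kraus_supp[OF Gs g] by (simp add: Zset_def)
      qed
    qed
    then have Z: "join_span V ((\<lambda>F. F \<circ> proj_so V Tp) ` \<F>) \<subseteq> Zset V X Qx Px"
      using sub2 unfolding Tp_def by (rule order_trans[rotated])
    have dF: "dprog V F" using nprog_dprog[OF nF F] .
    then obtain Ls where Ls: "kraus_rep V Ls F" by (auto simp: dprog_def)
    have Cf: "mmult X (mmult X (idop X - Qx) (ext_op V X L)) Px = (\<lambda>S T. 0)" if L: "L \<in> set Ls" for L
    proof -
      have "mmult V L Tp \<in> set (map (\<lambda>K. mmult V K Tp) Ls)" using L by simp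
      moreover have FT: "F \<circ> proj_so V Tp \<in> (\<lambda>F. F \<circ> proj_so V Tp) ` \<F>" using F by (rule imageI)
      ultimately have "mmult V L Tp \<in> join_span V ((\<lambda>F. F \<circ> proj_so V Tp) ` \<F>)"
        by (intro kraus_in_join[OF FT kraus_comp[OF pT Ls]])
      then have "mmult X (mmult X (idop X - Qx) (ext_op V X (mmult V L Tp))) Px = (\<lambda>S T. 0)"
        using Z by (auto simp: Zset_def)
      then show ?thesis
        by (simp add: ext_mult[OF fX VX, symmetric] mmult_assoc stepB[unfolded Tx_def])
    qed
    have MP: "mmult X (ext_op V X (Msum V Ls)) Px = Px"
    proof -
      have "op_range V Tp \<subseteq> term_space V F" using rT sub1 F by (auto simp: term_space_set_def)
      then have MT: "mmult V (Msum V Ls) Tp = Tp" by (rule Msum_fix[OF fV dF Ls pT])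
      have "mmult X (ext_op V X (Msum V Ls)) Px = mmult X (ext_op V X (Msum V Ls)) (mmult X Tx Px)"
        by (simp add: stepB)
      also have "\<dots> = mmult X (ext_op V X (mmult V (Msum V Ls) Tp)) Px"
        by (simp add: Tx_def mmult_assoc[symmetric] ext_mult[OF fX VX])
      also have "\<dots> = Px" using MT stepB by (simp add: Tx_def)
      finally show ?thesis .
    qed
    show "Re (trace X (mmult X (ext_op W X P) \<rho>)) \<le> Re (trace X (mmult X (ext_op W X Q) (ext_so V X F \<rho>)))"
      using establish_tot[OF fX VX dF Ls pP pQ Cf MP d] by (simp add: Px_def Qx_def)
  qed
qed



lemma vblk_empty: "supp_vec V \<psi> \<Longrightarrow> vblk V {} \<psi> = \<psi>"
  by (auto simp: vblk_def supp_vec_def fun_eq_iff)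

lemma part2_only_if_a:
  assumes fV: "finite V" and nE: "nprog V \<E>" and nF: "nprog V \<F>" and le: "le_T V \<E> \<F>"
  shows "term_space_set V \<E> \<subseteq> term_space_set V \<F>"
proof -
  define Tp where "Tp = proj_of V (term_space_set V \<E>)"
  have pT: "projector V Tp" and rT: "op_range V Tp = term_space_set V \<E>"
    using Tp_props[OF fV nE] by (auto simp: Tp_def)
  have pI: "projector V (idop V)" by (rule projector_idop[OF fV])
  have vE: "valid_tot V \<E> V Tp (idop V)"
    unfolding valid_tot_iff_n[OF fV nE fV pI]
  proof (intro allI impI)
    fix X \<rho> E assume c: "finite X \<and> V \<union> V \<subseteq> X \<and> density X \<rho> \<and> E \<in> \<E>"
    have fX: "finite X" and VX: "V \<subseteq> X" and d: "density X \<rho>" and E: "E \<in> \<E>" using c by auto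
    have dE: "dprog V E" using nprog_dprog[OF nE E] .
    then obtain Ks where Ks: "kraus_rep V Ks E" by (auto simp: dprog_def)
    have pIX: "projector X (ext_op V X (idop V))" by (rule projector_ext[OF fX VX pI])
    have MT: "mmult V (Msum V Ks) Tp = Tp"
      by (rule Msum_fix[OF fV dE Ks pT]) (use rT E in \<open>auto simp: term_space_set_def\<close>)
    show "Re (trace X (mmult X (ext_op V X Tp) \<rho>)) \<le> Re (trace X (mmult X (ext_op V X (idop V)) (ext_so V X E \<rho>)))"
    proof (rule establish_tot[OF fX VX dE Ks projector_ext[OF fX VX pT] pIX _ _ d])
      fix K show "mmult X (mmult X (idop X - ext_op V X (idop V)) (ext_op V X K)) (ext_op V X Tp) = (\<lambda>S T. 0)"
        by (simp add: ext_idop fun_eq_iff mmult_def)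
    next
      show "mmult X (ext_op V X (Msum V Ks)) (ext_op V X Tp) = ext_op V X Tp"
        by (simp add: ext_mult[OF fX VX] MT)
    qed
  qed
  have vF: "valid_tot V \<F> V Tp (idop V)" using le vE fV pT pI unfolding le_T_def by blast
  have vF': "\<forall>X \<rho> E. finite X \<and> V \<union> V \<subseteq> X \<and> density X \<rho> \<and> E \<in> \<F> \<longrightarrow>
      Re (trace X (mmult X (ext_op V X Tp) \<rho>)) \<le> Re (trace X (mmult X (ext_op V X (idop V)) (ext_so V X E \<rho>)))"
    by (rule iffD1[OF valid_tot_iff_n[OF fV nF fV pI] vF])
  have eT: "ext_op V V Tp = Tp" using pT by (simp add: ext_self projector_def)
  have eI: "ext_op V V (idop V) = idop V" by (simp add: ext_self)
  show ?thesis
  proof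
    fix \<psi> assume \<psi>: "\<psi> \<in> term_space_set V \<E>"
    have s\<psi>: "supp_vec V \<psi>" using \<psi> by (simp add: term_space_set_def)
    have T\<psi>: "apply_op V Tp \<psi> = \<psi>" using range_fix[OF pT] \<psi> rT by simp
    have "\<psi> \<in> term_space V F" if F: "F \<in> \<F>" for F
    proof -
      have dF: "dprog V F" using nprog_dprog[OF nF F] .
      then obtain Ls where Ls: "kraus_rep V Ls F" by (auto simp: dprog_def)
      have "vblk V {} \<psi> \<in> term_space V F"
      proof (rule extract_tot_all[OF fV subset_refl dF Ls pT pI _ s\<psi> T\<psi>])
        fix \<rho> assume "density V \<rho>"
        then show "Re (trace V (mmult V Tp \<rho>)) \<le> Re (trace V (mmult V (idop V) (ext_so V V F \<rho>)))"
          using vF'[rule_format, of V \<rho> F] fV F by (simp add: eT eI)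
      qed simp
      then show ?thesis using vblk_empty[OF s\<psi>] by simp
    qed
    then show "\<psi> \<in> term_space_set V \<F>" using s\<psi> by (simp add: term_space_set_def)
  qed
qed

lemma part2_only_if_b:
  assumes fV: "finite V" and nE: "nprog V \<E>" and nF: "nprog V \<F>" and le: "le_T V \<E> \<F>"
  shows "join_span V ((\<lambda>F. F \<circ> proj_so V (proj_of V (term_space_set V \<E>))) ` \<F>)
           \<subseteq> join_span V ((\<lambda>E. E \<circ> proj_so V (proj_of V (term_space_set V \<E>))) ` \<E>)"
proof -
  define Tp where "Tp = proj_of V (term_space_set V \<E>)"
  have pT: "projector V Tp" and rT: "op_range V Tp = term_space_set V \<E>"
    using Tp_props[OF fV nE] by (auto simp: Tp_def)
  have sT: "supp_op V Tp" using pT by (simp add: projector_def)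
  define W where "W = WW V"
  have fW: "finite W" using finite_WW[OF fV] by (simp add: W_def)
  have VW: "V \<subseteq> W" by (simp add: W_def V_WW)
  define U where "U = vecK V ` join_span V ((\<lambda>E. E \<circ> proj_so V Tp) ` \<E>)"
  have sU: "subsp W U" unfolding U_def W_def by (rule U_subsp)
  obtain R where pR: "projector W R" and rR: "op_range W R = U" using proj_exists[OF fW sU] by blast
  define v where "v = vecK V Tp"
  have sv: "supp_vec W v" by (simp add: v_def W_def supp_vecK)
  obtain P where pP: "projector W P" and rP: "op_range W P = {(\<lambda>R. c * v R) | c. True}"
    using span1_proj[OF fW sv] by blast
  have Kv: "apply_op W (ext_op V W K) v = vecK V (mmult V K Tp)" for K
    unfolding v_def W_def by (rule vecK_mult[OF fV, symmetric])
  have Tv: "apply_op W (ext_op V W Tp) v = v"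
    using Kv[of Tp] projector_idem[OF pT] by (simp add: v_def)
  have vE: "valid_tot V \<E> W P R"
    unfolding valid_tot_iff_n[OF fV nE fW pR]
  proof (intro allI impI)
    fix X \<rho> E assume c: "finite X \<and> V \<union> W \<subseteq> X \<and> density X \<rho> \<and> E \<in> \<E>"
    have fX: "finite X" and WX: "W \<subseteq> X" and VX: "V \<subseteq> X" and d: "density X \<rho>" and E: "E \<in> \<E>" using c by auto
    have dE: "dprog V E" using nprog_dprog[OF nE E] .
    then obtain Ks where Ks: "kraus_rep V Ks E" by (auto simp: dprog_def)
    show "Re (trace X (mmult X (ext_op W X P) \<rho>)) \<le> Re (trace X (mmult X (ext_op W X R) (ext_so V X E \<rho>)))"
    proof (rule establish_tot[OF fX VX dE Ks projector_ext[OF fX WX pP] projector_ext[OF fX WX pR] _ _ d])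
      fix K assume K: "K \<in> set Ks"
      have ET: "E \<circ> proj_so V Tp \<in> (\<lambda>E. E \<circ> proj_so V Tp) ` \<E>" using E by (rule imageI)
      have "mmult V K Tp \<in> set (map (\<lambda>K. mmult V K Tp) Ks)" using K by simp
      then have "mmult V K Tp \<in> join_span V ((\<lambda>E. E \<circ> proj_so V Tp) ` \<E>)"
        by (intro kraus_in_join[OF ET kraus_comp[OF pT Ks]])
      then have inU: "vecK V (mmult V K Tp) \<in> U" unfolding U_def by (rule imageI)
      have "mmult W (mmult W (idop W - R) (ext_op V W K)) P = (\<lambda>S T. 0)"
      proof (rule line_kill[OF fW pP rP])
        show "supp_op W (mmult W (idop W - R) (ext_op V W K))" by simp
        have RK: "apply_op W R (vecK V (mmult V K Tp)) = vecK V (mmult V K Tp)" using range_fix[OF pR] inU rR by simp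
        have svK: "supp_vec W (vecK V (mmult V K Tp))" by (simp add: W_def supp_vecK)
        show "apply_op W (mmult W (idop W - R) (ext_op V W K)) v = (\<lambda>R. 0)"
          using fW svK RK by (simp add: apply_mmult Kv apply_compl)
      qed
      then show "mmult X (mmult X (idop X - ext_op W X R) (ext_op V X K)) (ext_op W X P) = (\<lambda>S T. 0)"
        by (rule lift_zero[OF fX VW WX])
    next
      have MT: "mmult V (Msum V Ks) Tp = Tp"
        by (rule Msum_fix[OF fV dE Ks pT]) (use rT E in \<open>auto simp: term_space_set_def\<close>)
      have "mmult W (ext_op V W (Msum V Ks)) P = P"
        by (rule line_fix[OF fW pP rP]) (simp only: Kv[unfolded v_def] MT v_def)
      then show "mmult X (ext_op V X (Msum V Ks)) (ext_op W X P) = ext_op W X P"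
        by (rule lift_fix[OF fX VW WX])
    qed
  qed
  have vF: "valid_tot V \<F> W P R" using le vE fW pP pR unfolding le_T_def by blast
  have vF': "\<forall>X \<rho> E. finite X \<and> V \<union> W \<subseteq> X \<and> density X \<rho> \<and> E \<in> \<F> \<longrightarrow>
      Re (trace X (mmult X (ext_op W X P) \<rho>)) \<le> Re (trace X (mmult X (ext_op W X R) (ext_so V X E \<rho>)))"
    by (rule iffD1[OF valid_tot_iff_n[OF fV nF fW pR] vF])
  have ePP: "ext_op W W P = P" using pP by (simp add: ext_self projector_def)
  have eRR: "ext_op W W R = R" using pR by (simp add: ext_self projector_def)
  have "join_span V ((\<lambda>F. F \<circ> proj_so V Tp) ` \<F>) \<subseteq> {K. supp_op V K \<and> vecK V K \<in> U}"
  proof (rule join_span_sub[OF lin_closed_Zvec])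
    show "subsp (WW V) U" using sU by (simp add: W_def)
    fix G Gs assume G: "G \<in> (\<lambda>F. F \<circ> proj_so V Tp) ` \<F>" and Gs: "kraus_rep V Gs G"
    from G obtain F where F: "F \<in> \<F>" and GF: "G = F \<circ> proj_so V Tp" by (rule imageE) (rule that, simp_all)
    have dF: "dprog V F" using nprog_dprog[OF nF F] .
    then obtain Ls where Ls: "kraus_rep V Ls F" by (auto simp: dprog_def)
    have HF: "Re (trace W (mmult W P \<rho>')) \<le> Re (trace W (mmult W R (ext_so V W F \<rho>')))" if "density W \<rho>'" for \<rho>'
      using vF'[rule_format, of W \<rho>' F] fW VW F that by (simp add: ePP eRR)
    show "set Gs \<subseteq> {K. supp_op V K \<and> vecK V K \<in> U}"
    proof
      fix g assume g: "g \<in> set Gs"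
      have sg: "supp_op V g" using kraus_supp[OF Gs g] .
      have "apply_op W R (apply_op W (ext_op V W g) v) = apply_op W (ext_op V W g) v"
      proof (rule extract_par_all[OF fW VW Gs pP pR _ sv line_in[OF pP rP] g])
        fix \<phi> assume s\<phi>: "supp_vec W \<phi>" and P\<phi>: "apply_op W P \<phi> = \<phi>" and n\<phi>: "Re (inner W \<phi> \<phi>) \<le> 1"
        obtain c where c: "\<phi> = (\<lambda>R. c * v R)" using line_elem[OF pP rP s\<phi> P\<phi>] by blast
        have T\<phi>: "apply_op W (ext_op V W Tp) \<phi> = \<phi>" unfolding c apply_scale_vec Tv ..
        have eq: "ext_so V W G (outer W \<phi> \<phi>) = ext_so V W F (outer W \<phi> \<phi>)"
          unfolding GF by (rule ext_so_comp_fixed[OF fW VW pT Ls T\<phi>])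
        have "Re (trace W (mmult W P (outer W \<phi> \<phi>))) \<le> Re (trace W (mmult W R (ext_so V W F (outer W \<phi> \<phi>))))
            + Re (trace W (outer W \<phi> \<phi>)) - Re (trace W (ext_so V W F (outer W \<phi> \<phi>)))"
          by (rule H_tot_to_par[OF fW VW dF HF density_outer[OF n\<phi>]])
        then show "Re (trace W (mmult W P (outer W \<phi> \<phi>))) \<le> Re (trace W (mmult W R (ext_so V W G (outer W \<phi> \<phi>))))
            + Re (trace W (outer W \<phi> \<phi>)) - Re (trace W (ext_so V W G (outer W \<phi> \<phi>)))"
          by (simp only: eq)
      qed
      moreover have "mmult V g Tp = g" using kraus_comp_absorb[OF fV pT Ls _ g] Gs GF by simp
      ultimately have RL: "apply_op W R (vecK V g) = vecK V g" by (simp only: Kv)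
      have svL: "supp_vec W (vecK V g)" by (simp add: W_def supp_vecK)
      have "vecK V g \<in> op_range W R" using op_range_char[OF pR] RL svL by simp
      then show "g \<in> {K. supp_op V K \<and> vecK V K \<in> U}" using sg rR by simp
    qed
  qed
  then show ?thesis using back_in[OF fV] unfolding U_def Tp_def by blast
qed



lemma comp_idop:
  assumes fV: "finite V" and dE: "dprog V E"
  shows "E \<circ> proj_so V (idop V) = E"
proof -
  obtain Ks where Ks: "kraus_rep V Ks E" using dE by (auto simp: dprog_def)
  have r: "kraus_rep V (map (\<lambda>K. mmult V K (idop V)) Ks) (E \<circ> proj_so V (idop V))"
    by (rule kraus_comp[OF projector_idop[OF fV] Ks])
  have "\<forall>K\<in>set Ks. supp_op V K" using Ks by (simp add: kraus_rep_def)
  then have m: "map (\<lambda>K. mmult V K (idop V)) Ks = Ks"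
    using fV by (induction Ks) (auto simp: mmult_idop_right)
  show ?thesis using r Ks unfolding m kraus_rep_def by simp
qed

lemma term_all:
  assumes fV: "finite V" and tp: "\<forall>E\<in>\<E>. trace_preserving V E"
  shows "term_space_set V \<E> = {\<psi>. supp_vec V \<psi>}"
  using tp by (auto simp: term_space_set_def term_space_def trace_preserving_def)

lemma range_idop: "finite V \<Longrightarrow> op_range V (idop V) = {\<psi>. supp_vec V \<psi>}"
  using op_range_char[OF projector_idop] apply_idop by auto

lemma part3:
  assumes fV: "finite V" and nE: "nprog V \<E>" and nF: "nprog V \<F>"
    and tE: "\<forall>E\<in>\<E>. trace_preserving V E" and tF: "\<forall>F\<in>\<F>. trace_preserving V F"
    and p1: "le_P V \<E> \<F> \<longleftrightarrow> join_span V \<F> \<subseteq> join_span V \<E>"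
    and p2: "le_T V \<E> \<F> \<longleftrightarrow>
         term_space_set V \<E> \<subseteq> term_space_set V \<F> \<and>
         join_span V ((\<lambda>F. F \<circ> proj_so V (proj_of V (term_space_set V \<E>))) ` \<F>)
           \<subseteq> join_span V ((\<lambda>E. E \<circ> proj_so V (proj_of V (term_space_set V \<E>))) ` \<E>)"
  shows "le_T V \<E> \<F> \<longleftrightarrow> le_P V \<E> \<F>"
proof -
  have TE: "term_space_set V \<E> = {\<psi>. supp_vec V \<psi>}" by (rule term_all[OF fV tE])
  have TF: "term_space_set V \<F> = {\<psi>. supp_vec V \<psi>}" by (rule term_all[OF fV tF])
  have I: "proj_of V (term_space_set V \<E>) = idop V"
    unfolding TE by (rule proj_of_eq[OF fV projector_idop[OF fV] range_idop[OF fV]])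
  have iE: "(\<lambda>E. E \<circ> proj_so V (idop V)) ` \<E> = \<E>"
    using comp_idop[OF fV] nprog_dprog[OF nE] by (auto simp: image_iff)
  have iF: "(\<lambda>E. E \<circ> proj_so V (idop V)) ` \<F> = \<F>"
    using comp_idop[OF fV] nprog_dprog[OF nF] by (auto simp: image_iff)
  have p2': "le_T V \<E> \<F> \<longleftrightarrow> term_space_set V \<E> \<subseteq> term_space_set V \<F> \<and> join_span V \<F> \<subseteq> join_span V \<E>"
    using p2 unfolding I iE iF .
  show ?thesis using p1 p2' TE TF by simp
qed

theorem theorem5p8:
  fixes V :: "qvar set" and \<E> \<F> :: "superop set"
  assumes "finite V" and "nprog V \<E>" and "nprog V \<F>"
  shows "(le_P V \<E> \<F> \<longleftrightarrow> join_span V \<F> \<subseteq> join_span V \<E>)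
    \<and> (le_T V \<E> \<F> \<longleftrightarrow>
         term_space_set V \<E> \<subseteq> term_space_set V \<F> \<and>
         join_span V ((\<lambda>F. F \<circ> proj_so V (proj_of V (term_space_set V \<E>))) ` \<F>)
           \<subseteq> join_span V ((\<lambda>E. E \<circ> proj_so V (proj_of V (term_space_set V \<E>))) ` \<E>))
    \<and> ((\<forall>E\<in>\<E>. trace_preserving V E) \<and> (\<forall>F\<in>\<F>. trace_preserving V F)
         \<longrightarrow> (le_T V \<E> \<F> \<longleftrightarrow> le_P V \<E> \<F>))"
proof -
  have p1: "le_P V \<E> \<F> \<longleftrightarrow> join_span V \<F> \<subseteq> join_span V \<E>"
    using part1_if[OF assms] part1_only_if[OF assms] by blast
  have p2: "le_T V \<E> \<F> \<longleftrightarrow>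
         term_space_set V \<E> \<subseteq> term_space_set V \<F> \<and>
         join_span V ((\<lambda>F. F \<circ> proj_so V (proj_of V (term_space_set V \<E>))) ` \<F>)
           \<subseteq> join_span V ((\<lambda>E. E \<circ> proj_so V (proj_of V (term_space_set V \<E>))) ` \<E>)"
    using part2_if[OF assms] part2_only_if_a[OF assms] part2_only_if_b[OF assms] by blast
  show ?thesis using p1 p2 part3[OF assms _ _ p1 p2] by blast
qed


end
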